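(* (i) The group $E_{n+1}(A)$ of elementary matrices acts trivially on the image of $i_*:H_*({\mathbb{FL}}(A^n),\mathbb Z)\to H_*({\mathbb{FL}}(A^{n+1}),\mathbb Z)$. (ii) The group $E(A)$ of elementary matrices acts trivially on $H_*({\mathbb{FL}}(A^\infty),\mathbb Z)$.
   Context: $A$ is an associative ring with unit such that $A^m\cong A^n$ implies $m=n$; modules are left modules. For a free module $V$ of rank $n$, $FL(V)$ is the set of full flags $0=F_0\subset F_1\subset\cdots\subset F_n=V$ with each $F_i/F_{i-1}$ free of rank one, and $SPL(V)$ the set of unordered sets $\alpha=\{L_1,\dots,L_n\}$ of free rank-one submodules with $\bigoplus L_i\to V$ an isomorphism. For $\alpha\in SPL(V)$, $[\alpha]\subset FL(V)$ is the set of $n!$ flags $(0,L_{\sigma(1)},L_{\sigma(1)}\oplus L_{\sigma(2)},\dots,V)$ obtained from orderings of $\alpha$. ${\mathbb{FL}}(V)$ is the simplicial complex with vertex set $FL(V)$ whose simplices are the nonempty subsets of the sets $[\alpha]$, $\alpha\in SPL(V)$; $GL(V)$ acts on it. The inclusion $i:{\mathbb{FL}}(A^n)\to{\mathbb{FL}}(A^{n+1})$ sends a flag $(F_0,\dots,F_n=A^n)$ to $(F_0,\dots,F_n,A^{n+1})$. $A^\infty$ is the free module of finitely supported sequences containing $A^n$ as the first $n$ coordinates; $FL(A^\infty)$ is the set of flags $0=V_0\subset V_1\subset\cdots$ with $V_i/V_{i-1}$ free of rank one and $V_n=A^n$ for all large $n$, and ${\mathbb{FL}}(A^\infty)$ is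 the union of the subcomplexes ${\mathbb{FL}}(A^n)$, with $GL(A)=\bigcup GL_n(A)$ acting. $E_n(A)\subset GL_n(A)$ is the subgroup generated by elementary matrices, $E(A)=\bigcup_n E_n(A)$. *)

theory Defs
  imports Main
begin

text \<open>Vectors are finitely supported sequences in A; A^n consists of those
supported in the first n coordinates, A^\<infinity> of all finitely supported ones.\<close>

type_synonym 'a vec = "nat \<Rightarrow> 'a"
type_synonym 'a flag = "nat \<Rightarrow> 'a vec set"

definition vzero :: "'a::ring_1 vec" where
  "vzero = (\<lambda>i. 0)"

definition vadd :: "'a::ring_1 vec \<Rightarrow> 'a vec \<Rightarrow> 'a vec" where
  "vadd v w = (\<lambda>i. v i + w i)"

definition smult :: "'a::ring_1 \<Rightarrow> 'a vec \<Rightarrow> 'a vec" where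
  "smult a v = (\<lambda>i. a * v i)"

definition An :: "nat \<Rightarrow> 'a::ring_1 vec set" where
  "An n = {v. \<forall>i\<ge>n. v i = 0}"

definition IBN :: "'a::ring_1 itself \<Rightarrow> bool" where
  "IBN _ \<longleftrightarrow> (\<forall>m n (f :: 'a vec \<Rightarrow> 'a vec).
      bij_betw f (An m) (An n)
      \<and> (\<forall>v\<in>An m. \<forall>w\<in>An m. f (vadd v w) = vadd (f v) (f w))
      \<and> (\<forall>a. \<forall>v\<in>An m. f (smult a v) = smult a (f v))
      \<longrightarrow> m = n)"

definition free_rank_one :: "'a::ring_1 vec set \<Rightarrow> bool" where
  "free_rank_one L \<longleftrightarrow> (\<exists>v. L = {smult a v | a. True} \<and> (\<forall>a. smult a v = vzero \<longrightarrow> a = 0))"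

definition quot_free_rank_one :: "'a::ring_1 vec set \<Rightarrow> 'a vec set \<Rightarrow> bool" where
  "quot_free_rank_one F' F \<longleftrightarrow> F \<subseteq> F' \<and>
     (\<exists>v\<in>F'. F' = {vadd x (smult a v) | x a. x \<in> F} \<and> (\<forall>a. smult a v \<in> F \<longrightarrow> a = 0))"

text \<open>A full flag 0 = F_0 \<subset> ... \<subset> F_n = A^n, encoded as a sequence with
F_k = A^n for all k \<ge> n (normalisation, so that flags are determined by F_0..F_n).\<close>
definition FL :: "nat \<Rightarrow> 'a::ring_1 flag set" where
  "FL n = {F. F 0 = {vzero} \<and> (\<forall>k\<ge>n. F k = An n)
              \<and> (\<forall>i<n. quot_free_rank_one (F (Suc i)) (F i))}"

text \<open>Splittings: unordered sets of n free rank-one submodules of A^n whose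
direct sum maps isomorphically onto A^n.\<close>
definition SPL :: "nat \<Rightarrow> 'a::ring_1 vec set set set" where
  "SPL n = {\<alpha>. finite \<alpha> \<and> card \<alpha> = n \<and> (\<forall>L\<in>\<alpha>. free_rank_one L \<and> L \<subseteq> An n)
     \<and> (\<forall>v\<in>An n. \<exists>!x. (\<forall>L\<in>\<alpha>. x L \<in> L) \<and> (\<forall>L. L \<notin> \<alpha> \<longrightarrow> x L = vzero)
                         \<and> v = (\<lambda>i. \<Sum>L\<in>\<alpha>. x L i))}"

definition psum :: "'a::ring_1 vec set list \<Rightarrow> nat \<Rightarrow> 'a vec set" where
  "psum Ls k = {(\<lambda>i. \<Sum>j<k. x j i) | x. \<forall>j<k. x j \<in> Ls ! j}"

definition flag_of :: "nat \<Rightarrow> 'a::ring_1 vec set list \<Rightarrow> 'a flag" where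
  "flag_of n Ls = (\<lambda>k. if k < n then psum Ls k else An n)"

definition bracket :: "nat \<Rightarrow> 'a::ring_1 vec set set \<Rightarrow> 'a flag set" where
  "bracket n \<alpha> = {flag_of n Ls | Ls. distinct Ls \<and> set Ls = \<alpha>}"

definition FLc :: "nat \<Rightarrow> 'a::ring_1 flag set set" where
  "FLc n = {S. S \<noteq> {} \<and> (\<exists>\<alpha>\<in>SPL n. S \<subseteq> bracket n \<alpha>)}"

definition incl :: "nat \<Rightarrow> 'a::ring_1 flag \<Rightarrow> 'a flag" where
  "incl n F = (\<lambda>k. if k \<le> n then F k else An (Suc n))"

text \<open>FL(A^n) viewed inside FL(A^\<infinity>): (F_0..F_n) \<mapsto> (F_0..F_n, A^(n+1), A^(n+2), ...).\<close>
definition ext_inf :: "nat \<Rightarrow> 'a::ring_1 flag \<Rightarrow> 'a flag" where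
  "ext_inf n F = (\<lambda>k. if k \<le> n then F k else An k)"

definition FLinf :: "'a::ring_1 flag set set" where
  "FLinf = {ext_inf n ` S | n S. S \<in> FLc n}"

text \<open>The elementary matrix e_ij(a) = 1 + a E_ij (i \<noteq> j) acting on row vectors
(right action, i.e. as a left-module automorphism): v \<mapsto> v + (v_i a) e_j.\<close>
definition elem :: "nat \<Rightarrow> nat \<Rightarrow> 'a::ring_1 \<Rightarrow> 'a vec \<Rightarrow> 'a vec" where
  "elem i j a v = v(j := v j + v i * a)"

text \<open>E_n(A): group generated by elementary matrices of size n (the generating
set is closed under inverses, e_ij(a)^-1 = e_ij(-a), so the generated monoid
is the generated group). As automorphisms of A^\<infinity> these act as g \<oplus> id.\<close>
inductive_set En :: "nat \<Rightarrow> ('a::ring_1 vec \<Rightarrow> 'a vec) set" for n where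
  En_id: "id \<in> En n"
| En_step: "\<lbrakk>g \<in> En n; i < n; j < n; i \<noteq> j\<rbrakk> \<Longrightarrow> elem i j a \<circ> g \<in> En n"

definition E_all :: "('a::ring_1 vec \<Rightarrow> 'a vec) set" where
  "E_all = (\<Union>n. En n)"

definition act :: "('a::ring_1 vec \<Rightarrow> 'a vec) \<Rightarrow> 'a flag \<Rightarrow> 'a flag" where
  "act g F = (\<lambda>k. g ` F k)"

definition osimplex :: "'v set set \<Rightarrow> nat \<Rightarrow> 'v list \<Rightarrow> bool" where
  "osimplex K q s \<longleftrightarrow> length s = Suc q \<and> set s \<in> K"

definition supp :: "('v list \<Rightarrow> int) \<Rightarrow> 'v list set" where
  "supp c = {s. c s \<noteq> 0}"

definition chain :: "'v set set \<Rightarrow> nat \<Rightarrow> ('v list \<Rightarrow> int) \<Rightarrow> bool" where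
  "chain K q c \<longleftrightarrow> finite (supp c) \<and> (\<forall>s\<in>supp c. osimplex K q s)"

definition del_at :: "nat \<Rightarrow> 'v list \<Rightarrow> 'v list" where
  "del_at i s = take i s @ drop (Suc i) s"

definition bd :: "('v list \<Rightarrow> int) \<Rightarrow> 'v list \<Rightarrow> int" where
  "bd c = (\<lambda>t. \<Sum>s\<in>supp c. \<Sum>i<length s. if del_at i s = t then (-1) ^ i * c s else 0)"

definition push :: "('v \<Rightarrow> 'w) \<Rightarrow> ('v list \<Rightarrow> int) \<Rightarrow> 'w list \<Rightarrow> int" where
  "push f c = (\<lambda>t. \<Sum>s\<in>{s\<in>supp c. map f s = t}. c s)"

definition cycle :: "'v set set \<Rightarrow> nat \<Rightarrow> ('v list \<Rightarrow> int) \<Rightarrow> bool" where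
  "cycle K q z \<longleftrightarrow> chain K q z \<and> (q = 0 \<or> (\<forall>t. bd z t = 0))"

text \<open>Two q-chains are homologous: their difference is a boundary. Thus the
classes of cycles z, w in H_q(K;Z) agree iff homologous K q z w.\<close>
definition homologous :: "'v set set \<Rightarrow> nat \<Rightarrow> ('v list \<Rightarrow> int) \<Rightarrow> ('v list \<Rightarrow> int) \<Rightarrow> bool" where
  "homologous K q z w \<longleftrightarrow> (\<exists>c. chain K (Suc q) c \<and> (\<forall>t. bd c t = z t - w t))"

end

theory Submission
  imports Defs
begin

definition BD :: "('v list \<Rightarrow> int) \<Rightarrow> 'v list \<Rightarrow> int" where
  "BD d s = (\<Sum>k<length s. (-1)^k * d (del_at k s))"

definition prism :: "('v \<Rightarrow> 'w) \<Rightarrow> ('v \<Rightarrow> 'w) \<Rightarrow> nat \<Rightarrow> 'v list \<Rightarrow> 'w list" where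
  "prism f h i s = map f (take (Suc i) s) @ map h (drop i s)"

definition PP :: "('v \<Rightarrow> 'w) \<Rightarrow> ('v \<Rightarrow> 'w) \<Rightarrow> ('w list \<Rightarrow> int) \<Rightarrow> 'v list \<Rightarrow> int" where
  "PP f h d s = (\<Sum>i<length s. (-1)^i * d (prism f h i s))"

lemma del_at_0_Cons[simp]: "del_at 0 (x#t) = t"
  by (simp add: del_at_def)
lemma del_at_Suc_Cons[simp]: "del_at (Suc k) (x#t) = x # del_at k t"
  by (simp add: del_at_def)

lemma BD_Nil[simp]: "BD d [] = 0" by (simp add: BD_def)
lemma BD_Cons: "BD d (x#t) = d t - BD (\<lambda>u. d (x#u)) t"
  unfolding BD_def by (simp del: sum.lessThan_Suc add: sum.lessThan_Suc_shift sum_negf)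

lemma PP_Nil[simp]: "PP f h d [] = 0" by (simp add: PP_def)
lemma prism_0_Cons: "prism f h 0 (v#s) = f v # map h (v#s)"
  by (simp add: prism_def)
lemma prism_Suc_Cons: "prism f h (Suc i) (v#s) = f v # prism f h i s"
  by (simp add: prism_def)
lemma PP_Cons: "PP f h d (v#s) = d (f v # map h (v#s)) - PP f h (\<lambda>u. d (f v # u)) s"
  unfolding PP_def by (simp del: sum.lessThan_Suc add: sum.lessThan_Suc_shift sum_negf prism_0_Cons prism_Suc_Cons)

lemma del_at_map: "del_at k (map f s) = map f (del_at k s)"
  by (simp add: del_at_def take_map drop_map)

lemma length_del_at: "k < length s \<Longrightarrow> length (del_at k s) = length s - 1"
  by (simp add: del_at_def)

lemma BD_map: "BD d (map f s) = BD (\<lambda>u. d (map f u)) s"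
  unfolding BD_def by (simp add: del_at_map)

lemma prism_identity:
  "(\<Sum>i<length s. (-1)^i * BD d (prism f h i s)) + (\<Sum>j<length s. (-1)^j * PP f h d (del_at j s))
     = d (map h s) - d (map f s)"
proof (induction s arbitrary: d)
  case Nil
  then show ?case by simp
next
  case (Cons v s)
  define d1 where "d1 = (\<lambda>u. d (f v # u))"
  define d2 where "d2 = (\<lambda>u. d (f v # h v # u))"
  have A: "(\<Sum>i<length (v#s). (-1)^i * BD d (prism f h i (v#s)))
     = BD d (f v # map h (v#s)) - (\<Sum>i<length s. (-1)^i * BD d (f v # prism f h i s))"
    by (simp del: sum.lessThan_Suc add: sum.lessThan_Suc_shift sum_negf prism_0_Cons prism_Suc_Cons)
  have A2: "BD d (f v # map h (v#s)) = d (map h (v#s)) - (d1 (map h s) - BD d2 (map h s))"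
    by (simp add: BD_Cons d1_def d2_def)
  have A3: "(\<Sum>i<length s. (-1)^i * BD d (f v # prism f h i s))
     = PP f h d s - (\<Sum>i<length s. (-1)^i * BD d1 (prism f h i s))"
    by (simp add: BD_Cons d1_def PP_def right_diff_distrib sum_subtractf)
  have B: "(\<Sum>j<length (v#s). (-1)^j * PP f h d (del_at j (v#s)))
     = PP f h d s - (\<Sum>j<length s. (-1)^j * PP f h d (v # del_at j s))"
    by (simp del: sum.lessThan_Suc add: sum.lessThan_Suc_shift sum_negf)
  have B2: "(\<Sum>j<length s. (-1)^j * PP f h d (v # del_at j s))
     = BD d2 (map h s) - (\<Sum>j<length s. (-1)^j * PP f h d1 (del_at j s))"
    by (simp add: PP_Cons d1_def d2_def BD_def right_diff_distrib sum_subtractf del_at_map)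
  have IH: "(\<Sum>i<length s. (-1)^i * BD d1 (prism f h i s)) + (\<Sum>j<length s. (-1)^j * PP f h d1 (del_at j s))
     = d1 (map h s) - d1 (map f s)" by (rule Cons.IH)
  show ?case
    unfolding A A2 A3 B B2 using IH by (simp add: d1_def)
qed


definition dlt :: "'w list \<Rightarrow> 'w list \<Rightarrow> int" where
  "dlt t u = (if u = t then 1 else 0)"

definition hom :: "('v \<Rightarrow> 'w) \<Rightarrow> ('v \<Rightarrow> 'w) \<Rightarrow> ('v list \<Rightarrow> int) \<Rightarrow> 'w list \<Rightarrow> int" where
  "hom f h z = (\<lambda>t. \<Sum>s\<in>supp z. z s * PP f h (dlt t) s)"

lemma not_supp: "s \<notin> supp c \<Longrightarrow> c s = 0" by (simp add: supp_def)

lemma bd_eq: assumes "finite A" "supp c \<subseteq> A"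
  shows "bd c t = (\<Sum>s\<in>A. c s * BD (dlt t) s)"
proof -
  have "bd c t = (\<Sum>s\<in>supp c. c s * BD (dlt t) s)"
    unfolding bd_def BD_def dlt_def
    by (rule sum.cong) (auto simp: sum_distrib_left intro!: sum.cong)
  also have "\<dots> = (\<Sum>s\<in>A. c s * BD (dlt t) s)"
    by (rule sum.mono_neutral_left) (use assms in \<open>auto simp: not_supp\<close>)
  finally show ?thesis .
qed

lemma push_eq: assumes "finite A" "supp c \<subseteq> A"
  shows "push f c t = (\<Sum>s\<in>A. c s * dlt t (map f s))"
proof -
  have "push f c t = (\<Sum>s\<in>supp c. c s * dlt t (map f s))"
  proof -
    have fs: "finite (supp c)" using assms finite_subset by blast
    show ?thesis unfolding push_def dlt_def
      by (simp add: sum.inter_filter[OF fs] if_distrib cong: if_cong)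
  qed
  also have "\<dots> = (\<Sum>s\<in>A. c s * dlt t (map f s))"
    by (rule sum.mono_neutral_left) (use assms in \<open>auto simp: not_supp\<close>)
  finally show ?thesis .
qed

lemma lin_ext: assumes "finite I" "finite U" "p ` I \<subseteq> U"
  shows "(\<Sum>u\<in>U. (\<Sum>i\<in>I. a i * dlt u (p i)) * g u) = (\<Sum>i\<in>I. a i * g (p i))"
proof -
  have "(\<Sum>u\<in>U. (\<Sum>i\<in>I. a i * dlt u (p i)) * g u) = (\<Sum>i\<in>I. \<Sum>u\<in>U. a i * dlt u (p i) * g u)"
    by (simp add: sum_distrib_right sum.swap[of _ U])
  also have "\<dots> = (\<Sum>i\<in>I. a i * g (p i))"
  proof (rule sum.cong[OF refl])
    fix i assume "i \<in> I"
    then have "p i \<in> U" using assms by auto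
    then show "(\<Sum>u\<in>U. a i * dlt u (p i) * g u) = a i * g (p i)"
    proof -
      have "(\<Sum>u\<in>U. a i * dlt u (p i) * g u) = (\<Sum>u\<in>U. if u = p i then a i * g u else 0)"
        by (rule sum.cong) (auto simp: dlt_def)
      also have "\<dots> = a i * g (p i)" using \<open>p i \<in> U\<close> assms(2) by (simp add: sum.delta')
      finally show ?thesis .
    qed
  qed
  finally show ?thesis .
qed

lemma finite_supp_push: "finite (supp c) \<Longrightarrow> supp (push f c) \<subseteq> map f ` supp c"
proof
  fix x assume "x \<in> supp (push f c)"
  have "{s \<in> supp c. map f s = x} \<noteq> {}" 
  proof (rule notI)
    assume e: "{s \<in> supp c. map f s = x} = {}"
    have "push f c x = 0" unfolding push_def e by simp
    then show False using \<open>x \<in> supp (push f c)\<close> by (simp add: supp_def)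
  qed
  then show "x \<in> map f ` supp c" by auto
qed

lemma finite_supp_push': "finite (supp c) \<Longrightarrow> finite (supp (push f c))"
  by (meson finite_imageI finite_subset finite_supp_push)


definition SG :: "('v list \<Rightarrow> int) \<Rightarrow> ('v list \<times> nat) set" where
  "SG z = Sigma (supp z) (\<lambda>s. {..<length s})"

lemma finite_SG: "finite (supp z) \<Longrightarrow> finite (SG z)"
  unfolding SG_def by auto

lemma double_sum: "finite (supp z) \<Longrightarrow>
  (\<Sum>s\<in>supp z. z s * (\<Sum>i<length s. g s i)) = (\<Sum>x\<in>SG z. z (fst x) * g (fst x) (snd x))"
proof -
  assume fz: "finite (supp z)"
  have "(\<Sum>s\<in>supp z. z s * (\<Sum>i<length s. g s i)) = (\<Sum>s\<in>supp z. \<Sum>i<length s. z s * g s i)"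
    by (simp add: sum_distrib_left)
  also have "\<dots> = (\<Sum>(s,i)\<in>SG z. z s * g s i)"
    unfolding SG_def by (rule sum.Sigma) (use fz in auto)
  finally show ?thesis by (simp add: split_beta)
qed

lemma hom_as: "finite (supp z) \<Longrightarrow>
  hom f h z u = (\<Sum>x\<in>SG z. (z (fst x) * (-1)^(snd x)) * dlt u (prism f h (snd x) (fst x)))"
  unfolding hom_def PP_def by (simp add: double_sum mult.assoc)

lemma supp_hom: "finite (supp z) \<Longrightarrow> supp (hom f h z) \<subseteq> (\<lambda>x. prism f h (snd x) (fst x)) ` SG z"
proof
  fix u assume fz: "finite (supp z)" and u: "u \<in> supp (hom f h z)"
  show "u \<in> (\<lambda>x. prism f h (snd x) (fst x)) ` SG z"
  proof (rule ccontr)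
    assume nu: "u \<notin> (\<lambda>x. prism f h (snd x) (fst x)) ` SG z"
    have "hom f h z u = 0" unfolding hom_as[OF fz]
      by (rule sum.neutral) (use nu in \<open>auto simp: dlt_def\<close>)
    then show False using u by (simp add: supp_def)
  qed
qed

lemma bd_hom: assumes fz: "finite (supp z)" and cyc: "\<forall>t. t \<noteq> [] \<longrightarrow> bd z t = 0"
  shows "bd (hom f h z) t = push h z t - push f z t"
proof -
  let ?p = "\<lambda>x. prism f h (snd x) (fst x)"
  let ?U = "?p ` SG z"
  have fU: "finite ?U" using finite_SG[OF fz] by simp
  have "bd (hom f h z) t = (\<Sum>u\<in>?U. hom f h z u * BD (dlt t) u)"
    by (rule bd_eq[OF fU supp_hom[OF fz]])
  also have "\<dots> = (\<Sum>x\<in>SG z. (z (fst x) * (-1)^(snd x)) * BD (dlt t) (?p x))"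
    unfolding hom_as[OF fz] by (rule lin_ext[OF finite_SG[OF fz] fU]) auto
  also have "\<dots> = (\<Sum>s\<in>supp z. z s * (\<Sum>i<length s. (-1)^i * BD (dlt t) (prism f h i s)))"
    by (simp add: double_sum[OF fz] mult.assoc)
  also have "\<dots> = (\<Sum>s\<in>supp z. z s * (dlt t (map h s) - dlt t (map f s)
        - (\<Sum>j<length s. (-1)^j * PP f h (dlt t) (del_at j s))))"
  proof (rule sum.cong[OF refl])
    fix s
    have "(\<Sum>i<length s. (-1)^i * BD (dlt t) (prism f h i s)) = dlt t (map h s) - dlt t (map f s)
        - (\<Sum>j<length s. (-1)^j * PP f h (dlt t) (del_at j s))"
      using prism_identity[where d="dlt t" and f=f and h=h and s=s] by linarith
    then show "z s * (\<Sum>i<length s. (-1)^i * BD (dlt t) (prism f h i s)) = z s * (dlt t (map h s) - dlt t (map f s)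
        - (\<Sum>j<length s. (-1)^j * PP f h (dlt t) (del_at j s)))" by simp
  qed
  also have "\<dots> = push h z t - push f z t
        - (\<Sum>s\<in>supp z. z s * (\<Sum>j<length s. (-1)^j * PP f h (dlt t) (del_at j s)))"
    by (simp add: push_eq[OF fz subset_refl] right_diff_distrib sum_subtractf)
  also have "(\<Sum>s\<in>supp z. z s * (\<Sum>j<length s. (-1)^j * PP f h (dlt t) (del_at j s))) = 0"
  proof -
    let ?q = "\<lambda>x. del_at (snd x) (fst x)"
    let ?W = "?q ` SG z"
    have fW: "finite ?W" using finite_SG[OF fz] by simp
    have "(\<Sum>s\<in>supp z. z s * (\<Sum>j<length s. (-1)^j * PP f h (dlt t) (del_at j s)))
       = (\<Sum>x\<in>SG z. (z (fst x) * (-1)^(snd x)) * PP f h (dlt t) (?q x))"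
      by (simp add: double_sum[OF fz] mult.assoc)
    also have "\<dots> = (\<Sum>w\<in>?W. (\<Sum>x\<in>SG z. (z (fst x) * (-1)^(snd x)) * dlt w (?q x)) * PP f h (dlt t) w)"
      by (rule lin_ext[OF finite_SG[OF fz] fW, symmetric]) auto
    also have "\<dots> = (\<Sum>w\<in>?W. bd z w * PP f h (dlt t) w)"
    proof (rule sum.cong[OF refl])
      fix w
      have "bd z w = (\<Sum>s\<in>supp z. z s * BD (dlt w) s)" by (rule bd_eq[OF fz subset_refl])
      also have "\<dots> = (\<Sum>x\<in>SG z. (z (fst x) * (-1)^(snd x)) * dlt w (?q x))"
        unfolding BD_def by (simp add: double_sum[OF fz] mult.assoc)
      finally show "(\<Sum>x\<in>SG z. (z (fst x) * (-1)^(snd x)) * dlt w (?q x)) * PP f h (dlt t) w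
         = bd z w * PP f h (dlt t) w" by simp
    qed
    also have "\<dots> = 0"
      by (rule sum.neutral) (use cyc in \<open>metis PP_Nil mult_zero_left mult_zero_right\<close>)
    finally show ?thesis .
  qed
  finally show ?thesis by simp
qed


lemma bd_as: "finite (supp c) \<Longrightarrow>
   bd c w = (\<Sum>x\<in>SG c. (c (fst x) * (-1)^(snd x)) * dlt w (del_at (snd x) (fst x)))"
  using bd_eq[of "supp c" c w] unfolding BD_def by (simp add: double_sum mult.assoc)

lemma supp_bd: "finite (supp c) \<Longrightarrow> supp (bd c) \<subseteq> (\<lambda>x. del_at (snd x) (fst x)) ` SG c"
proof
  fix u assume fz: "finite (supp c)" and u: "u \<in> supp (bd c)"
  show "u \<in> (\<lambda>x. del_at (snd x) (fst x)) ` SG c"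
  proof (rule ccontr)
    assume nu: "u \<notin> (\<lambda>x. del_at (snd x) (fst x)) ` SG c"
    have "bd c u = 0" unfolding bd_as[OF fz]
      by (rule sum.neutral) (use nu in \<open>auto simp: dlt_def\<close>)
    then show False using u by (simp add: supp_def)
  qed
qed

lemma supp_add: "supp (\<lambda>t. a t + b t) \<subseteq> supp a \<union> supp b"
  unfolding supp_def by auto
lemma supp_diff: "supp (\<lambda>t. a t - b t) \<subseteq> supp a \<union> supp b"
  unfolding supp_def by auto
lemma supp_neg: "supp (\<lambda>t. - a t) = supp a"
  unfolding supp_def by auto

lemma bd_add: assumes "finite (supp a)" "finite (supp b)"
  shows "bd (\<lambda>t. a t + b t) u = bd a u + bd b u"
proof -
  have f: "finite (supp a \<union> supp b)" using assms by simp
  show ?thesis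
    unfolding bd_eq[OF f supp_add] bd_eq[OF f Un_upper1] bd_eq[OF f Un_upper2]
    by (simp add: distrib_right sum.distrib)
qed

lemma bd_neg: assumes "finite (supp a)"
  shows "bd (\<lambda>t. - a t) u = - bd a u"
  unfolding bd_eq[OF assms subset_refl] bd_eq[OF assms, of "\<lambda>t. - a t", unfolded supp_neg, OF subset_refl]
  by (simp add: sum_negf)

lemma chain_add: "chain K q a \<Longrightarrow> chain K q b \<Longrightarrow> chain K q (\<lambda>t. a t + b t)"
  unfolding chain_def using supp_add[of a b] by (auto intro: finite_subset)

lemma chain_neg: "chain K q a \<Longrightarrow> chain K q (\<lambda>t. - a t)"
  unfolding chain_def supp_neg by auto

lemma homologous_refl: "homologous K q z z"
  unfolding homologous_def
  by (rule exI[of _ "\<lambda>_. 0"]) (simp add: chain_def supp_def bd_def)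

lemma homologous_sym: "homologous K q z w \<Longrightarrow> homologous K q w z"
  unfolding homologous_def
proof (elim exE conjE)
  fix c assume c: "chain K (Suc q) c" "\<forall>t. bd c t = z t - w t"
  show "\<exists>c. chain K (Suc q) c \<and> (\<forall>t. bd c t = w t - z t)"
  proof (rule exI[of _ "\<lambda>t. - c t"], intro conjI allI)
    have fc: "finite (supp c)" using c(1) by (simp add: chain_def)
    show "chain K (Suc q) (\<lambda>t. - c t)" by (rule chain_neg[OF c(1)])
    fix t show "bd (\<lambda>t. - c t) t = w t - z t" using bd_neg[OF fc, of t] c(2) by simp
  qed
qed

lemma homologous_trans: "homologous K q x y \<Longrightarrow> homologous K q y z \<Longrightarrow> homologous K q x z"
  unfolding homologous_def
proof (elim exE conjE)
  fix c d assume c: "chain K (Suc q) c" "\<forall>t. bd c t = x t - y t"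
     and d: "chain K (Suc q) d" "\<forall>t. bd d t = y t - z t"
  show "\<exists>c. chain K (Suc q) c \<and> (\<forall>t. bd c t = x t - z t)"
  proof (rule exI[of _ "\<lambda>t. c t + d t"], intro conjI allI)
    have fc: "finite (supp c)" using c(1) by (simp add: chain_def)
    have fd: "finite (supp d)" using d(1) by (simp add: chain_def)
    show "chain K (Suc q) (\<lambda>t. c t + d t)" by (rule chain_add[OF c(1) d(1)])
    fix t show "bd (\<lambda>t. c t + d t) t = x t - z t" using bd_add[OF fc fd, of t] c(2) d(2) by simp
  qed
qed

lemma push_as_sum: "finite (supp c) \<Longrightarrow> push f c t = (\<Sum>s\<in>supp c. c s * dlt t (map f s))"
  by (rule push_eq) auto

lemma bd_push: assumes fc: "finite (supp c)"
  shows "bd (push f c) t = push f (bd c) t"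
proof -
  have fU: "finite (map f ` supp c)" using fc by simp
  have "bd (push f c) t = (\<Sum>u\<in>map f ` supp c. push f c u * BD (dlt t) u)"
    by (rule bd_eq[OF fU finite_supp_push[OF fc]])
  also have "\<dots> = (\<Sum>s\<in>supp c. c s * BD (dlt t) (map f s))"
    unfolding push_as_sum[OF fc] by (rule lin_ext[OF fc fU]) auto
  finally have L: "bd (push f c) t = (\<Sum>s\<in>supp c. c s * BD (dlt t) (map f s))" .
  let ?q = "\<lambda>x. del_at (snd x) (fst x)"
  have fW: "finite (?q ` SG c)" using finite_SG[OF fc] by simp
  have "push f (bd c) t = (\<Sum>w\<in>?q ` SG c. bd c w * dlt t (map f w))"
    by (rule push_eq[OF fW supp_bd[OF fc]])
  also have "\<dots> = (\<Sum>x\<in>SG c. (c (fst x) * (-1)^(snd x)) * dlt t (map f (?q x)))"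
    unfolding bd_as[OF fc] by (rule lin_ext[OF finite_SG[OF fc] fW]) auto
  also have "\<dots> = (\<Sum>s\<in>supp c. c s * BD (dlt t) (map f s))"
    unfolding BD_map unfolding BD_def by (simp add: double_sum[OF fc] mult.assoc)
  finally show ?thesis using L by simp
qed

lemma push_diff: assumes "finite (supp a)" "finite (supp b)"
  shows "push f (\<lambda>t. a t - b t) u = push f a u - push f b u"
proof -
  have f: "finite (supp a \<union> supp b)" using assms by simp
  show ?thesis
    unfolding push_eq[OF f supp_diff] push_eq[OF f Un_upper1] push_eq[OF f Un_upper2]
    by (simp add: left_diff_distrib sum_subtractf)
qed

lemma chain_push: assumes "chain K q c" "\<forall>\<sigma>\<in>K. f ` \<sigma> \<in> K'"
  shows "chain K' q (push f c)"
proof -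
  have fc: "finite (supp c)" using assms(1) by (simp add: chain_def)
  show ?thesis unfolding chain_def
  proof
    show "finite (supp (push f c))" by (rule finite_supp_push'[OF fc])
    show "\<forall>s\<in>supp (push f c). osimplex K' q s"
    proof
      fix u assume "u \<in> supp (push f c)"
      then obtain s where s: "s \<in> supp c" "u = map f s" using finite_supp_push[OF fc] by auto
      then have "osimplex K q s" using assms(1) by (simp add: chain_def)
      then show "osimplex K' q u" using s assms(2) by (simp add: osimplex_def)
    qed
  qed
qed

lemma homologous_push: assumes h: "homologous K q w y" and fw: "finite (supp w)" and fy: "finite (supp y)"
  and K: "\<forall>\<sigma>\<in>K. f ` \<sigma> \<in> K'"
  shows "homologous K' q (push f w) (push f y)"
proof -
  obtain c where c: "chain K (Suc q) c" "\<forall>t. bd c t = w t - y t" using h unfolding homologous_def by blast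
  have fc: "finite (supp c)" using c(1) by (simp add: chain_def)
  have bdc: "bd c = (\<lambda>t. w t - y t)" using c(2) by auto
  show ?thesis unfolding homologous_def
  proof (intro exI conjI allI)
    show "chain K' (Suc q) (push f c)" by (rule chain_push[OF c(1) K])
    fix t show "bd (push f c) t = push f w t - push f y t"
      unfolding bd_push[OF fc] bdc by (rule push_diff[OF fw fy])
  qed
qed

lemma push_comp: assumes fc: "finite (supp c)"
  shows "push g (push f c) = push (g \<circ> f) c"
proof
  fix t
  have fU: "finite (map f ` supp c)" using fc by simp
  have "push g (push f c) t = (\<Sum>u\<in>map f ` supp c. push f c u * dlt t (map g u))"
    by (rule push_eq[OF fU finite_supp_push[OF fc]])
  also have "\<dots> = (\<Sum>s\<in>supp c. c s * dlt t (map g (map f s)))"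
    unfolding push_as_sum[OF fc] by (rule lin_ext[OF fc fU]) auto
  also have "\<dots> = push (g \<circ> f) c t" by (simp add: push_as_sum[OF fc])
  finally show "push g (push f c) t = push (g \<circ> f) c t" .
qed

lemma push_cong: "(\<And>s. s \<in> supp c \<Longrightarrow> map f s = map g s) \<Longrightarrow> push f c = push g c"
  unfolding push_def by (intro ext sum.cong) auto

lemma push_id: "finite (supp c) \<Longrightarrow> push (\<lambda>x. x) c = c"
proof
  fix t assume fc: "finite (supp c)"
  show "push (\<lambda>x. x) c t = c t"
    unfolding push_as_sum[OF fc] dlt_def
    by (cases "t \<in> supp c") (auto simp: fc if_distrib not_supp cong: if_cong)
qed

lemma cycle_bd: assumes "cycle K q z" shows "\<forall>t. t \<noteq> [] \<longrightarrow> bd z t = 0"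
proof (intro allI impI)
  fix t :: "'a list" assume t: "t \<noteq> []"
  show "bd z t = 0"
  proof (cases "q = 0")
    case True
    have "\<forall>s\<in>supp z. length s = 1" using assms True by (simp add: cycle_def chain_def osimplex_def)
    then show ?thesis unfolding bd_def using t
      by (intro sum.neutral ballI) (auto simp: del_at_def)
  next
    case False then show ?thesis using assms by (simp add: cycle_def)
  qed
qed

lemma contig: assumes z: "cycle K q z"
  and down: "\<forall>\<sigma>\<in>K'. \<forall>\<tau>. \<tau> \<noteq> {} \<and> \<tau> \<subseteq> \<sigma> \<longrightarrow> \<tau> \<in> K'"
  and fh: "\<forall>\<sigma>\<in>K. f ` \<sigma> \<union> h ` \<sigma> \<in> K'"
  shows "homologous K' q (push h z) (push f z)"
proof -
  have fz: "finite (supp z)" using z by (simp add: cycle_def chain_def)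
  show ?thesis unfolding homologous_def
  proof (intro exI conjI allI)
    show "bd (hom f h z) t = push h z t - push f z t" for t
      by (rule bd_hom[OF fz cycle_bd[OF z]])
    show "chain K' (Suc q) (hom f h z)" unfolding chain_def
    proof
      show "finite (supp (hom f h z))"
        using supp_hom[OF fz] finite_SG[OF fz] by (meson finite_imageI finite_subset)
      show "\<forall>u\<in>supp (hom f h z). osimplex K' (Suc q) u"
      proof
        fix u assume "u \<in> supp (hom f h z)"
        then obtain s i where si: "s \<in> supp z" "i < length s" "u = prism f h i s"
          using supp_hom[OF fz, of f h] unfolding SG_def by auto
        have os: "osimplex K q s" using si z by (simp add: cycle_def chain_def)
        have len: "length u = Suc (Suc q)" using si os by (simp add: prism_def osimplex_def)
        have "set u \<subseteq> f ` set s \<union> h ` set s" using si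
          by (auto simp: prism_def dest: in_set_takeD in_set_dropD)
        moreover have "set u \<noteq> {}" using len by auto
        moreover have "f ` set s \<union> h ` set s \<in> K'" using fh os by (simp add: osimplex_def)
        ultimately have "set u \<in> K'" using down by blast
        then show "osimplex K' (Suc q) u" using len by (simp add: osimplex_def)
      qed
    qed
  qed
qed

definition en :: "nat \<Rightarrow> 'a::ring_1 vec" where
  "en n = (\<lambda>k. if k = n then 1 else 0)"

definition Ln :: "nat \<Rightarrow> 'a::ring_1 vec set" where
  "Ln n = {smult c (en n) | c. True}"

definition lsum :: "'a::ring_1 vec set \<Rightarrow> 'a vec set \<Rightarrow> 'a vec set" where
  "lsum L X = {vadd l x | l x. l \<in> L \<and> x \<in> X}"

lemma en_notin: "en n \<notin> An n"
  by (simp add: en_def An_def)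

lemma en_in_Ln: "en n \<in> Ln n"
  unfolding Ln_def by (rule CollectI, rule exI[of _ 1]) (simp add: smult_def)

lemma SPL_D: assumes "\<alpha> \<in> SPL n"
  shows "finite \<alpha>" "card \<alpha> = n" "\<forall>L\<in>\<alpha>. free_rank_one L \<and> L \<subseteq> An n"
    "\<forall>v\<in>An n. \<exists>!x. (\<forall>L\<in>\<alpha>. x L \<in> L) \<and> (\<forall>L. L \<notin> \<alpha> \<longrightarrow> x L = vzero)
                         \<and> v = (\<lambda>i. \<Sum>L\<in>\<alpha>. x L i)"
proof -
  have h: "finite \<alpha> \<and> card \<alpha> = n \<and> (\<forall>L\<in>\<alpha>. free_rank_one L \<and> L \<subseteq> An n)
     \<and> (\<forall>v\<in>An n. \<exists>!x. (\<forall>L\<in>\<alpha>. x L \<in> L) \<and> (\<forall>L. L \<notin> \<alpha> \<longrightarrow> x L = vzero)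
                         \<and> v = (\<lambda>i. \<Sum>L\<in>\<alpha>. x L i))"
    using assms unfolding SPL_def mem_Collect_eq .
  show "finite \<alpha>" by (rule h[THEN conjunct1])
  show "card \<alpha> = n" by (rule h[THEN conjunct2, THEN conjunct1])
  show "\<forall>L\<in>\<alpha>. free_rank_one L \<and> L \<subseteq> An n" by (rule h[THEN conjunct2, THEN conjunct2, THEN conjunct1])
  show "\<forall>v\<in>An n. \<exists>!x. (\<forall>L\<in>\<alpha>. x L \<in> L) \<and> (\<forall>L. L \<notin> \<alpha> \<longrightarrow> x L = vzero)
                         \<and> v = (\<lambda>i. \<Sum>L\<in>\<alpha>. x L i)" by (rule h[THEN conjunct2, THEN conjunct2, THEN conjunct2])
qed

lemma SPL_I: assumes "finite \<alpha>" "card \<alpha> = n" "\<forall>L\<in>\<alpha>. free_rank_one L \<and> L \<subseteq> An n"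
    "\<forall>v\<in>An n. \<exists>!x. (\<forall>L\<in>\<alpha>. x L \<in> L) \<and> (\<forall>L. L \<notin> \<alpha> \<longrightarrow> x L = vzero)
                         \<and> v = (\<lambda>i. \<Sum>L\<in>\<alpha>. x L i)"
  shows "\<alpha> \<in> SPL n"
  unfolding SPL_def mem_Collect_eq by (rule conjI[OF assms(1) conjI[OF assms(2) conjI[OF assms(3) assms(4)]]])

lemma Ln_notin: assumes "\<alpha> \<in> SPL n" shows "Ln n \<notin> \<alpha>"
proof
  assume L: "Ln n \<in> \<alpha>"
  have "free_rank_one (Ln n :: 'a vec set) \<and> (Ln n :: 'a vec set) \<subseteq> An n" by (rule bspec[OF SPL_D(3)[OF assms] L])
  then have "(Ln n :: 'a vec set) \<subseteq> An n" by (rule conjunct2)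
  then have "(en n :: 'a vec) \<in> An n" by (rule subsetD[OF _ en_in_Ln])
  then show False by (simp add: en_notin)
qed

lemma An_mono: "m \<le> n \<Longrightarrow> An m \<subseteq> An n"
  unfolding An_def by auto

lemma Ln_sub: "Ln n \<subseteq> An (Suc n)"
  unfolding Ln_def An_def smult_def en_def by auto

lemma free_Ln: "free_rank_one (Ln n)"
proof -
  have "Ln n = {smult a (en n) | a. True}" by (simp add: Ln_def)
  moreover have "\<forall>a. smult a (en n) = vzero \<longrightarrow> a = (0::'a)"
  proof (intro allI impI)
    fix a :: 'a assume "smult a (en n) = vzero"
    then have "smult a (en n) n = vzero n" by (rule arg_cong)
    then show "a = 0" by (simp add: smult_def en_def vzero_def)
  qed
  ultimately show ?thesis unfolding free_rank_one_def by (intro exI[of _ "en n"] conjI)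
qed

lemma SPL_insert: assumes a: "\<alpha> \<in> SPL n"
  shows "insert (Ln n) \<alpha> \<in> SPL (Suc n)"
proof -
  let ?e = "en n :: 'a vec"
  note fin = SPL_D(1)[OF a] and card = SPL_D(2)[OF a] and mem = SPL_D(3)[OF a] and dec = SPL_D(4)[OF a]
  have nin: "Ln n \<notin> \<alpha>" by (rule Ln_notin[OF a])
  have dec2: "\<forall>v\<in>An (Suc n). \<exists>!x. (\<forall>L\<in>insert (Ln n) \<alpha>. x L \<in> L) \<and> (\<forall>L. L \<notin> insert (Ln n) \<alpha> \<longrightarrow> x L = vzero)
                         \<and> v = (\<lambda>i. \<Sum>L\<in>insert (Ln n) \<alpha>. x L i)"
  proof
    fix v :: "'a vec" assume v: "v \<in> An (Suc n)"
    define v0 where "v0 = v(n := 0)"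
    have v0: "v0 \<in> An n" using v unfolding v0_def An_def by auto
    let ?P0 = "\<lambda>x. (\<forall>L\<in>\<alpha>. x L \<in> L) \<and> (\<forall>L. L \<notin> \<alpha> \<longrightarrow> x L = vzero) \<and> v0 = (\<lambda>i. \<Sum>L\<in>\<alpha>. x L i)"
    have ex: "\<exists>!x. ?P0 x" by (rule bspec[OF dec v0])
    obtain x0 where x0P: "?P0 x0" and uniP: "\<forall>y. ?P0 y \<longrightarrow> y = x0"
      using ex by (elim ex1E) (rule that)
    have x01: "\<forall>L\<in>\<alpha>. x0 L \<in> L" using x0P by (rule conjunct1)
    have x02: "\<forall>L. L \<notin> \<alpha> \<longrightarrow> x0 L = vzero" using x0P by blast
    have x03: "\<And>i. v0 i = (\<Sum>L\<in>\<alpha>. x0 L i)" using x0P by (simp only: fun_eq_iff)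
    define x where "x = x0(Ln n := smult (v n) ?e)"
    have xLn: "x (Ln n) = smult (v n) ?e" by (simp add: x_def)
    have xo: "\<And>L. L \<noteq> Ln n \<Longrightarrow> x L = x0 L" by (simp add: x_def)
    have sumx: "(\<Sum>L\<in>\<alpha>. x L i) = (\<Sum>L\<in>\<alpha>. x0 L i)" for i
      by (rule sum.cong[OF refl]) (use nin in \<open>auto simp: x_def\<close>)
    show "\<exists>!x. (\<forall>L\<in>insert (Ln n) \<alpha>. x L \<in> L) \<and> (\<forall>L. L \<notin> insert (Ln n) \<alpha> \<longrightarrow> x L = vzero)
                         \<and> v = (\<lambda>i. \<Sum>L\<in>insert (Ln n) \<alpha>. x L i)"
    proof (rule ex1I[of _ x], intro conjI)
      show "\<forall>L\<in>insert (Ln n) \<alpha>. x L \<in> L"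
      proof
        fix L assume L: "L \<in> insert (Ln n) \<alpha>"
        show "x L \<in> L"
        proof (cases "L = Ln n")
          case True then show ?thesis using xLn unfolding Ln_def by blast
        next
          case False then show ?thesis using L x01 xo by simp
        qed
      qed
      show "\<forall>L. L \<notin> insert (Ln n) \<alpha> \<longrightarrow> x L = vzero"
        using x02 xo by simp
      show "v = (\<lambda>i. \<Sum>L\<in>insert (Ln n) \<alpha>. x L i)"
      proof
        fix i
        have "(\<Sum>L\<in>insert (Ln n) \<alpha>. x L i) = x (Ln n) i + (\<Sum>L\<in>\<alpha>. x L i)"
          by (rule sum.insert[OF fin nin])
        also have "\<dots> = v n * ?e i + v0 i" by (simp only: xLn sumx x03) (simp add: smult_def)
        also have "\<dots> = v i" by (simp add: v0_def en_def)
        finally show "v i = (\<Sum>L\<in>insert (Ln n) \<alpha>. x L i)" by simp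
      qed
    next
      fix y assume y: "(\<forall>L\<in>insert (Ln n) \<alpha>. y L \<in> L) \<and> (\<forall>L. L \<notin> insert (Ln n) \<alpha> \<longrightarrow> y L = vzero)
                         \<and> v = (\<lambda>i. \<Sum>L\<in>insert (Ln n) \<alpha>. y L i)"
      have y1: "\<forall>L\<in>insert (Ln n) \<alpha>. y L \<in> L" using y by (rule conjunct1)
      have y2: "\<forall>L. L \<notin> insert (Ln n) \<alpha> \<longrightarrow> y L = vzero" using y by blast
      have y3: "\<And>i. v i = (\<Sum>L\<in>insert (Ln n) \<alpha>. y L i)" using y by (simp only: fun_eq_iff)
      have "y (Ln n) \<in> Ln n" using y1 by blast
      then obtain c where c: "y (Ln n) = smult c ?e" unfolding Ln_def by blast
      have yn: "\<forall>L\<in>\<alpha>. y L n = 0"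
      proof
        fix L assume L: "L \<in> \<alpha>"
        then have "y L \<in> An n" using y1 mem by blast
        then show "y L n = 0" by (simp add: An_def)
      qed
      have vi: "v i = y (Ln n) i + (\<Sum>L\<in>\<alpha>. y L i)" for i
        using y3[of i] sum.insert[OF fin nin] by simp
      have "(\<Sum>L\<in>\<alpha>. y L n) = 0" using yn by simp
      then have cv: "c = v n" using vi[of n] c by (simp add: smult_def en_def)
      define y' where "y' = y(Ln n := vzero)"
      have yo: "\<And>L. L \<noteq> Ln n \<Longrightarrow> y' L = y L" by (simp add: y'_def)
      have sumy: "(\<Sum>L\<in>\<alpha>. y' L i) = (\<Sum>L\<in>\<alpha>. y L i)" for i
        by (rule sum.cong[OF refl]) (use nin in \<open>auto simp: y'_def\<close>)
      have "?P0 y'"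
      proof (intro conjI)
        show "\<forall>L\<in>\<alpha>. y' L \<in> L"
        proof
          fix L assume L: "L \<in> \<alpha>"
          then have "L \<noteq> Ln n" using nin by blast
          then show "y' L \<in> L" using yo y1 L by simp
        qed
        show "\<forall>L. L \<notin> \<alpha> \<longrightarrow> y' L = vzero" using y2 unfolding y'_def by simp
        show "v0 = (\<lambda>i. \<Sum>L\<in>\<alpha>. y' L i)"
        proof
          fix i
          have "(\<Sum>L\<in>\<alpha>. y' L i) = v i - y (Ln n) i" using vi[of i] sumy[of i] by simp
          also have "\<dots> = v0 i" using c cv by (simp add: v0_def smult_def en_def)
          finally show "v0 i = (\<Sum>L\<in>\<alpha>. y' L i)" by simp
        qed
      qed
      then have "y' = x0" using uniP by blast
      show "y = x"
      proof
        fix L show "y L = x L"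
        proof (cases "L = Ln n")
          case True then show ?thesis using c cv xLn by simp
        next
          case False then show ?thesis using \<open>y' = x0\<close> yo[OF False] xo[OF False] by simp
        qed
      qed
    qed
  qed
  show ?thesis
  proof (rule SPL_I[OF _ _ _ dec2])
    show "finite (insert (Ln n) \<alpha>)" using fin by simp
    show "card (insert (Ln n) \<alpha>) = Suc n" using fin card nin by simp
    show "\<forall>L\<in>insert (Ln n) \<alpha>. free_rank_one L \<and> L \<subseteq> An (Suc n)"
    proof
      fix L assume L: "L \<in> insert (Ln n) \<alpha>"
      show "free_rank_one L \<and> L \<subseteq> An (Suc n)"
      proof (cases "L = Ln n")
        case True then show ?thesis by (simp add: free_Ln Ln_sub)
      next
        case False
        then have "L \<in> \<alpha>" using L by simp
        then have "free_rank_one L" "L \<subseteq> An n" using mem by auto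
        then show ?thesis using An_mono[of n "Suc n"] by auto
      qed
    qed
  qed
qed


lemma psum_0: "psum Ls 0 = {vzero}"
  by (auto simp: psum_def vzero_def)

lemma psum_Suc_Cons: "psum (L#Ls) (Suc k) = lsum L (psum Ls k)"
proof
  show "psum (L#Ls) (Suc k) \<subseteq> lsum L (psum Ls k)"
  proof
    fix u assume "u \<in> psum (L#Ls) (Suc k)"
    then obtain x where x: "u = (\<lambda>i. \<Sum>j<Suc k. x j i)" "\<forall>j<Suc k. x j \<in> (L#Ls) ! j"
      unfolding psum_def by blast
    have "u = vadd (x 0) (\<lambda>i. \<Sum>j<k. x (Suc j) i)"
      unfolding x(1) vadd_def by (simp only: sum.lessThan_Suc_shift)
    moreover have "x 0 \<in> L" using x(2) by auto
    moreover have "(\<lambda>i. \<Sum>j<k. x (Suc j) i) \<in> psum Ls k"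
      unfolding psum_def using x(2) by (auto intro!: exI[of _ "\<lambda>j. x (Suc j)"])
    ultimately show "u \<in> lsum L (psum Ls k)" unfolding lsum_def by blast
  qed
  show "lsum L (psum Ls k) \<subseteq> psum (L#Ls) (Suc k)"
  proof
    fix u assume "u \<in> lsum L (psum Ls k)"
    then obtain l x where lx: "u = vadd l (\<lambda>i. \<Sum>j<k. x j i)" "l \<in> L" "\<forall>j<k. x j \<in> Ls ! j"
      unfolding lsum_def psum_def by blast
    define x' where "x' = case_nat l x"
    have "u = (\<lambda>i. \<Sum>j<Suc k. x' j i)"
      unfolding lx(1) vadd_def x'_def by (simp only: sum.lessThan_Suc_shift nat.case)
    moreover have "\<forall>j<Suc k. x' j \<in> (L#Ls) ! j"
      using lx(2,3) unfolding x'_def by (auto split: nat.split)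
    ultimately show "u \<in> psum (L#Ls) (Suc k)" unfolding psum_def by blast
  qed
qed

lemma psum_cong: "(\<And>j. j < k \<Longrightarrow> Ls ! j = Ms ! j) \<Longrightarrow> psum Ls k = psum Ms k"
  unfolding psum_def by auto

lemma psum_sub: "(\<And>j. j < k \<Longrightarrow> Ls ! j \<subseteq> An n) \<Longrightarrow> psum Ls k \<subseteq> An n"
  unfolding psum_def An_def by (auto intro!: sum.neutral)

lemma SPL_len: "\<alpha> \<in> SPL n \<Longrightarrow> distinct Ls \<Longrightarrow> set Ls = \<alpha> \<Longrightarrow> length Ls = n"
  using SPL_D(2) distinct_card by metis

lemma psum_full: assumes a: "\<alpha> \<in> SPL n" and d: "distinct Ls" and s: "set Ls = \<alpha>"
  shows "psum Ls n = An n"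
proof
  have len: "length Ls = n" by (rule SPL_len[OF a d s])
  show "psum Ls n \<subseteq> An n"
    by (rule psum_sub) (use SPL_D(3)[OF a] s len in \<open>auto\<close>)
  show "An n \<subseteq> psum Ls n"
  proof
    fix v :: "'a vec" assume v: "v \<in> An n"
    obtain x where x: "\<forall>L\<in>\<alpha>. x L \<in> L" "v = (\<lambda>i. \<Sum>L\<in>\<alpha>. x L i)"
      using SPL_D(4)[OF a] v by blast
    have bij: "bij_betw ((!) Ls) {..<n} \<alpha>" by (rule bij_betw_nth) (use d s len in auto)
    have vv: "v = (\<lambda>i. \<Sum>j<n. x (Ls ! j) i)"
      unfolding x(2) by (intro ext) (rule sum.reindex_bij_betw[OF bij, symmetric])
    have xin: "\<forall>j<n. x (Ls ! j) \<in> Ls ! j" using x(1) s len by auto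
    show "v \<in> psum Ls n" unfolding psum_def mem_Collect_eq
      by (rule exI[of _ "\<lambda>j. x (Ls ! j)"]) (use vv xin in simp)
  qed
qed

lemma bracketI: "distinct Ls \<Longrightarrow> set Ls = \<alpha> \<Longrightarrow> flag_of n Ls \<in> bracket n \<alpha>"
  unfolding bracket_def by blast

lemma bracketE: "F \<in> bracket n \<alpha> \<Longrightarrow> (\<And>Ls. distinct Ls \<Longrightarrow> set Ls = \<alpha> \<Longrightarrow> F = flag_of n Ls \<Longrightarrow> P) \<Longrightarrow> P"
  unfolding bracket_def by blast

lemma FLcI: "\<alpha> \<in> SPL n \<Longrightarrow> S \<noteq> {} \<Longrightarrow> S \<subseteq> bracket n \<alpha> \<Longrightarrow> S \<in> FLc n"
  unfolding FLc_def by blast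

lemma FLcE: "S \<in> FLc n \<Longrightarrow> (\<And>\<alpha>. \<alpha> \<in> SPL n \<Longrightarrow> S \<noteq> {} \<Longrightarrow> S \<subseteq> bracket n \<alpha> \<Longrightarrow> P) \<Longrightarrow> P"
  unfolding FLc_def by blast

lemma FLc_vertex: assumes "S \<in> FLc n" "F \<in> S"
  shows "\<exists>\<alpha> Ls. \<alpha> \<in> SPL n \<and> distinct Ls \<and> set Ls = \<alpha> \<and> F = flag_of n Ls"
proof -
  obtain \<alpha> where a: "\<alpha> \<in> SPL n" "S \<subseteq> bracket n \<alpha>" using assms(1) by (rule FLcE)
  then have "F \<in> bracket n \<alpha>" using assms(2) by blast
  then obtain Ls where "distinct Ls" "set Ls = \<alpha>" "F = flag_of n Ls" by (rule bracketE)
  then show ?thesis using a by blast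
qed

lemma FLc_down: "\<sigma> \<in> FLc n \<Longrightarrow> \<tau> \<noteq> {} \<Longrightarrow> \<tau> \<subseteq> \<sigma> \<Longrightarrow> \<tau> \<in> FLc n"
  by (erule FLcE) (rule FLcI, assumption+, blast)

lemma flag_of_ge: "n \<le> k \<Longrightarrow> flag_of n Ls k = An n"
  by (simp add: flag_of_def)

lemma incl_flag: assumes a: "\<alpha> \<in> SPL n" and d: "distinct Ls" and s: "set Ls = \<alpha>"
  shows "incl n (flag_of n Ls) = flag_of (Suc n) (Ls @ [Ln n])"
proof
  fix k
  have len: "length Ls = n" by (rule SPL_len[OF a d s])
  have pc: "psum (Ls @ [Ln n]) k = psum Ls k" if "k \<le> n" for k
    by (rule psum_cong) (use that len in \<open>auto simp: nth_append\<close>)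
  show "incl n (flag_of n Ls) k = flag_of (Suc n) (Ls @ [Ln n]) k"
  proof (cases "k < n")
    case True then show ?thesis using pc[of k] by (simp add: incl_def flag_of_def)
  next
    case False
    show ?thesis
    proof (cases "k = n")
      case True then show ?thesis using pc[of n] psum_full[OF a d s] by (simp add: incl_def flag_of_def)
    next
      case False then show ?thesis using \<open>\<not> k < n\<close> by (simp add: incl_def flag_of_def)
    qed
  qed
qed

definition jmap :: "nat \<Rightarrow> 'a::ring_1 flag \<Rightarrow> 'a flag" where
  "jmap n F = (\<lambda>k. if k = 0 then {vzero} else if k \<le> n then lsum (Ln n) (F (k - 1)) else An (Suc n))"

lemma jmap_flag: assumes len: "length Ls = n"
  shows "jmap n (flag_of n Ls) = flag_of (Suc n) (Ln n # Ls)"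
proof
  fix k show "jmap n (flag_of n Ls) k = flag_of (Suc n) (Ln n # Ls) k"
  proof (cases k)
    case 0 then show ?thesis by (simp add: jmap_def flag_of_def psum_0)
  next
    case (Suc k')
    then show ?thesis using len by (simp add: jmap_def flag_of_def psum_Suc_Cons)
  qed
qed

lemma contig_incl_jmap: assumes S: "S \<in> FLc n"
  shows "incl n ` S \<union> jmap n ` S \<in> FLc (Suc n)"
proof -
  obtain \<alpha> where a: "\<alpha> \<in> SPL n" and ne: "S \<noteq> {}" and Sb: "S \<subseteq> bracket n \<alpha>"
    using S by (rule FLcE)
  have nin: "Ln n \<notin> \<alpha>" by (rule Ln_notin[OF a])
  have sub: "incl n ` S \<union> jmap n ` S \<subseteq> bracket (Suc n) (insert (Ln n) \<alpha>)"
  proof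
    fix G assume "G \<in> incl n ` S \<union> jmap n ` S"
    then obtain F where F: "F \<in> S" "G = incl n F \<or> G = jmap n F" by blast
    then have "F \<in> bracket n \<alpha>" using Sb by blast
    then obtain Ls where Ls: "distinct Ls" "set Ls = \<alpha>" "F = flag_of n Ls" by (rule bracketE)
    have len: "length Ls = n" by (rule SPL_len[OF a Ls(1,2)])
    show "G \<in> bracket (Suc n) (insert (Ln n) \<alpha>)"
      using F(2)
    proof
      assume "G = incl n F"
      then have G: "G = flag_of (Suc n) (Ls @ [Ln n])" using incl_flag[OF a Ls(1,2)] Ls(3) by simp
      have "distinct (Ls @ [Ln n])" using Ls(1,2) nin by simp
      moreover have "set (Ls @ [Ln n]) = insert (Ln n) \<alpha>" using Ls(2) by auto
      ultimately show ?thesis unfolding G by (rule bracketI)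
    next
      assume "G = jmap n F"
      then have G: "G = flag_of (Suc n) (Ln n # Ls)" using jmap_flag[OF len] Ls(3) by simp
      have "distinct (Ln n # Ls)" using Ls(1,2) nin by simp
      moreover have "set (Ln n # Ls) = insert (Ln n) \<alpha>" using Ls(2) by auto
      ultimately show ?thesis unfolding G by (rule bracketI)
    qed
  qed
  moreover have "incl n ` S \<union> jmap n ` S \<noteq> {}" using ne by blast
  ultimately show ?thesis by (intro FLcI[OF SPL_insert[OF a]])
qed

lemma incl_FLc: "S \<in> FLc n \<Longrightarrow> incl n ` S \<in> FLc (Suc n)"
proof -
  assume S: "S \<in> FLc n"
  have "S \<noteq> {}" using S by (rule FLcE)
  then have ne: "incl n ` S \<noteq> {}" by blast
  show ?thesis by (rule FLc_down[OF contig_incl_jmap[OF S] ne]) blast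
qed

definition lin :: "('a::ring_1 vec \<Rightarrow> 'a vec) \<Rightarrow> bool" where
  "lin \<phi> \<longleftrightarrow> (\<forall>v w. \<phi> (vadd v w) = vadd (\<phi> v) (\<phi> w)) \<and> (\<forall>c v. \<phi> (smult c v) = smult c (\<phi> v))"

lemma lin_zero: "lin \<phi> \<Longrightarrow> \<phi> vzero = vzero"
proof -
  assume l: "lin \<phi>"
  have "smult 0 (vzero::'a vec) = vzero" by (simp add: smult_def vzero_def)
  then have "\<phi> vzero = \<phi> (smult 0 vzero)" by simp
  also have "\<dots> = smult 0 (\<phi> vzero)" using l by (simp add: lin_def)
  also have "\<dots> = vzero" by (simp add: smult_def vzero_def)
  finally show ?thesis .
qed

lemma lin_sum: assumes l: "lin \<phi>" and f: "finite A"
  shows "\<phi> (\<lambda>i. \<Sum>L\<in>A. y L i) = (\<lambda>i. \<Sum>L\<in>A. \<phi> (y L) i)"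
  using f
proof (induction A rule: finite_induct)
  case empty
  then show ?case using lin_zero[OF l] by (simp add: vzero_def)
next
  case (insert x F)
  have "(\<lambda>i. \<Sum>L\<in>insert x F. y L i) = vadd (y x) (\<lambda>i. \<Sum>L\<in>F. y L i)"
    using insert by (simp add: vadd_def)
  then have "\<phi> (\<lambda>i. \<Sum>L\<in>insert x F. y L i) = vadd (\<phi> (y x)) (\<phi> (\<lambda>i. \<Sum>L\<in>F. y L i))"
    using l by (simp add: lin_def)
  then show ?case using insert by (simp add: vadd_def)
qed

lemma lin_elem: "lin (elem i j a)"
  unfolding lin_def elem_def vadd_def smult_def
  by (auto simp: fun_eq_iff algebra_simps)

lemma elem_inv: "i \<noteq> j \<Longrightarrow> elem i j (-a) (elem i j a v) = v"
  unfolding elem_def by (auto simp: fun_eq_iff algebra_simps)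

lemma elem_inv2: "i \<noteq> j \<Longrightarrow> elem i j a (elem i j (-a) v) = v"
  unfolding elem_def by (auto simp: fun_eq_iff algebra_simps)

lemma elem_An: "i < m \<Longrightarrow> j < m \<Longrightarrow> elem i j a ` An m \<subseteq> An m"
  unfolding elem_def An_def by auto

locale autom =
  fixes m :: nat and \<phi> \<psi> :: "'a::ring_1 vec \<Rightarrow> 'a vec"
  assumes lphi: "lin \<phi>" and lpsi: "lin \<psi>" and inv1: "\<And>v. \<psi> (\<phi> v) = v" and inv2: "\<And>v. \<phi> (\<psi> v) = v"
    and phiA: "\<phi> ` An m \<subseteq> An m" and psiA: "\<psi> ` An m \<subseteq> An m"
begin

lemma phi_add: "\<phi> (vadd v w) = vadd (\<phi> v) (\<phi> w)" using lphi by (simp add: lin_def)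
lemma phi_smult: "\<phi> (smult c v) = smult c (\<phi> v)" using lphi by (simp add: lin_def)

lemma phiA_eq: "\<phi> ` An m = An m"
proof
  show "\<phi> ` An m \<subseteq> An m" by (rule phiA)
  show "An m \<subseteq> \<phi> ` An m"
  proof
    fix v :: "'a vec" assume "v \<in> An m"
    then have "\<psi> v \<in> An m" using psiA by blast
    then show "v \<in> \<phi> ` An m" using inv2[of v] by (metis image_eqI)
  qed
qed

lemma inj_phi: "inj \<phi>" by (metis injI inv1)

lemma img_inv1: "\<psi> ` (\<phi> ` X) = X"
  by (simp add: image_comp inv1 comp_def)
lemma img_inv2: "\<phi> ` (\<psi> ` X) = X"
  by (simp add: image_comp inv2 comp_def)

lemma inj_img: "inj (image \<phi>)"
  by (metis injI img_inv1)

lemma line_img: "\<phi> ` {smult c v | c. True} = {smult c (\<phi> v) | c. True}"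
proof
  show "\<phi> ` {smult c v | c. True} \<subseteq> {smult c (\<phi> v) | c. True}" by (auto simp: phi_smult)
  show "{smult c (\<phi> v) | c. True} \<subseteq> \<phi> ` {smult c v | c. True}"
  proof
    fix u assume "u \<in> {smult c (\<phi> v) | c. True}"
    then obtain c where "u = smult c (\<phi> v)" by blast
    then have "u = \<phi> (smult c v)" by (simp add: phi_smult)
    then show "u \<in> \<phi> ` {smult c v | c. True}" by blast
  qed
qed

lemma inj_on_img: "inj_on (image \<phi>) A"
  by (rule inj_on_subset[OF inj_img subset_UNIV])

lemma free_img: assumes "free_rank_one L" shows "free_rank_one (\<phi> ` L)"
proof -
  obtain v where v: "L = {smult a v | a. True}" "\<forall>a. smult a v = vzero \<longrightarrow> a = 0"
    using assms unfolding free_rank_one_def by blast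
  have "\<phi> ` L = {smult a (\<phi> v) | a. True}" unfolding v(1) by (rule line_img)
  moreover have "\<forall>a. smult a (\<phi> v) = vzero \<longrightarrow> a = 0"
  proof (intro allI impI)
    fix a assume "smult a (\<phi> v) = vzero"
    then have "\<phi> (smult a v) = \<phi> vzero" using phi_smult lin_zero[OF lphi] by simp
    then have "smult a v = vzero" using inj_phi by (simp add: inj_eq)
    then show "a = 0" using v(2) by blast
  qed
  ultimately show ?thesis unfolding free_rank_one_def by blast
qed

lemma SPL_img: assumes a: "\<alpha> \<in> SPL m" shows "image \<phi> ` \<alpha> \<in> SPL m"
proof (rule SPL_I)
  note fin = SPL_D(1)[OF a] and card = SPL_D(2)[OF a] and mem = SPL_D(3)[OF a] and dec = SPL_D(4)[OF a]
  show "finite (image \<phi> ` \<alpha>)" using fin by simp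
  show "card (image \<phi> ` \<alpha>) = m" using card card_image[OF inj_on_img] by simp
  show "\<forall>L\<in>image \<phi> ` \<alpha>. free_rank_one L \<and> L \<subseteq> An m"
    using mem free_img phiA by blast
  have injA: "inj_on (image \<phi>) \<alpha>" by (rule inj_on_img)
  show "\<forall>v\<in>An m. \<exists>!x. (\<forall>L\<in>image \<phi> ` \<alpha>. x L \<in> L) \<and> (\<forall>L. L \<notin> image \<phi> ` \<alpha> \<longrightarrow> x L = vzero)
                         \<and> v = (\<lambda>i. \<Sum>L\<in>image \<phi> ` \<alpha>. x L i)"
  proof
    fix v :: "'a vec" assume v: "v \<in> An m"
    have u: "\<psi> v \<in> An m" using v psiA by blast
    obtain x where x: "(\<forall>L\<in>\<alpha>. x L \<in> L)" "(\<forall>L. L \<notin> \<alpha> \<longrightarrow> x L = vzero)"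
        "\<psi> v = (\<lambda>i. \<Sum>L\<in>\<alpha>. x L i)"
      and uni: "\<And>y. (\<forall>L\<in>\<alpha>. y L \<in> L) \<Longrightarrow> (\<forall>L. L \<notin> \<alpha> \<longrightarrow> y L = vzero)
                         \<Longrightarrow> \<psi> v = (\<lambda>i. \<Sum>L\<in>\<alpha>. y L i) \<Longrightarrow> y = x"
      using dec u by (smt (verit))
    define x' where "x' = (\<lambda>L'. \<phi> (x (\<psi> ` L')))"
    have sumre: "(\<lambda>i. \<Sum>L'\<in>image \<phi> ` \<alpha>. g L' i) = (\<lambda>i. \<Sum>L\<in>\<alpha>. g (\<phi> ` L) i)" for g :: "'a vec set \<Rightarrow> 'a vec"
      by (intro ext) (simp add: sum.reindex[OF injA])
    show "\<exists>!x. (\<forall>L\<in>image \<phi> ` \<alpha>. x L \<in> L) \<and> (\<forall>L. L \<notin> image \<phi> ` \<alpha> \<longrightarrow> x L = vzero)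
                         \<and> v = (\<lambda>i. \<Sum>L\<in>image \<phi> ` \<alpha>. x L i)"
    proof (rule ex1I[of _ x'], intro conjI)
      show "\<forall>L\<in>image \<phi> ` \<alpha>. x' L \<in> L" using x(1) unfolding x'_def by (auto simp: img_inv1)
      show "\<forall>L. L \<notin> image \<phi> ` \<alpha> \<longrightarrow> x' L = vzero"
      proof (intro allI impI)
        fix L assume "L \<notin> image \<phi> ` \<alpha>"
        then have "\<psi> ` L \<notin> \<alpha>" by (metis image_eqI img_inv2)
        then show "x' L = vzero" using x(2) lin_zero[OF lphi] unfolding x'_def by simp
      qed
      have "v = \<phi> (\<psi> v)" by (simp add: inv2)
      also have "\<dots> = (\<lambda>i. \<Sum>L\<in>\<alpha>. \<phi> (x L) i)" unfolding x(3) by (rule lin_sum[OF lphi fin])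
      also have "\<dots> = (\<lambda>i. \<Sum>L'\<in>image \<phi> ` \<alpha>. x' L' i)" unfolding sumre x'_def by (simp add: img_inv1)
      finally show "v = (\<lambda>i. \<Sum>L'\<in>image \<phi> ` \<alpha>. x' L' i)" .
    next
      fix y' assume y': "(\<forall>L\<in>image \<phi> ` \<alpha>. y' L \<in> L) \<and> (\<forall>L. L \<notin> image \<phi> ` \<alpha> \<longrightarrow> y' L = vzero)
                         \<and> v = (\<lambda>i. \<Sum>L\<in>image \<phi> ` \<alpha>. y' L i)"
      define y where "y = (\<lambda>L. \<psi> (y' (\<phi> ` L)))"
      have "y = x"
      proof (rule uni)
        show "\<forall>L\<in>\<alpha>. y L \<in> L" using y' unfolding y_def by (metis image_eqI img_inv1)
        show "\<forall>L. L \<notin> \<alpha> \<longrightarrow> y L = vzero"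
        proof (intro allI impI)
          fix L assume "L \<notin> \<alpha>"
          then have "\<phi> ` L \<notin> image \<phi> ` \<alpha>" using inj_img by (metis img_inv1 image_iff)
          then show "y L = vzero" using y' lin_zero[OF lpsi] unfolding y_def by simp
        qed
        have "\<psi> v = \<psi> (\<lambda>i. \<Sum>L\<in>\<alpha>. y' (\<phi> ` L) i)" using y' sumre by metis
        also have "\<dots> = (\<lambda>i. \<Sum>L\<in>\<alpha>. y L i)" unfolding y_def by (rule lin_sum[OF lpsi fin])
        finally show "\<psi> v = (\<lambda>i. \<Sum>L\<in>\<alpha>. y L i)" .
      qed
      show "y' = x'"
      proof
        fix L
        have "y (\<psi> ` L) = \<psi> (y' L)" unfolding y_def by (simp add: img_inv2)
        then have "x (\<psi> ` L) = \<psi> (y' L)" using \<open>y = x\<close> by simp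
        then show "y' L = x' L" unfolding x'_def by (simp add: inv2)
      qed
    qed
  qed
qed

lemma psum_img: assumes "k \<le> length Ls" shows "\<phi> ` psum Ls k = psum (map (image \<phi>) Ls) k"
proof
  show "\<phi> ` psum Ls k \<subseteq> psum (map (image \<phi>) Ls) k"
  proof
    fix u assume "u \<in> \<phi> ` psum Ls k"
    then obtain x where x: "u = \<phi> (\<lambda>i. \<Sum>j<k. x j i)" "\<forall>j<k. x j \<in> Ls ! j"
      unfolding psum_def by blast
    have "u = (\<lambda>i. \<Sum>j<k. \<phi> (x j) i)" unfolding x(1) by (rule lin_sum[OF lphi]) simp
    moreover have "\<forall>j<k. \<phi> (x j) \<in> map (image \<phi>) Ls ! j" using x(2) assms by auto
    ultimately show "u \<in> psum (map (image \<phi>) Ls) k" unfolding psum_def mem_Collect_eq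
      by (intro exI[of _ "\<lambda>j. \<phi> (x j)"] conjI)
  qed
  show "psum (map (image \<phi>) Ls) k \<subseteq> \<phi> ` psum Ls k"
  proof
    fix u assume "u \<in> psum (map (image \<phi>) Ls) k"
    then obtain y where y: "u = (\<lambda>i. \<Sum>j<k. y j i)" "\<forall>j<k. y j \<in> map (image \<phi>) Ls ! j"
      unfolding psum_def by blast
    define x where "x = (\<lambda>j. \<psi> (y j))"
    have xin: "\<forall>j<k. x j \<in> Ls ! j" using y(2) assms unfolding x_def by (auto simp: inv1)
    have "\<phi> (\<lambda>i. \<Sum>j<k. x j i) = (\<lambda>i. \<Sum>j<k. \<phi> (x j) i)" by (rule lin_sum[OF lphi]) simp
    also have "\<dots> = u" unfolding y(1) x_def by (simp add: inv2)
    finally show "u \<in> \<phi> ` psum Ls k" using xin unfolding psum_def by blast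
  qed
qed

lemma flag_img: assumes "length Ls = m" shows "act \<phi> (flag_of m Ls) = flag_of m (map (image \<phi>) Ls)"
  unfolding act_def flag_of_def using psum_img assms phiA_eq by (auto simp: fun_eq_iff)

lemma FLc_img: assumes S: "S \<in> FLc m" shows "act \<phi> ` S \<in> FLc m"
proof -
  obtain \<alpha> where a: "\<alpha> \<in> SPL m" and Sb: "S \<subseteq> bracket m \<alpha>" and ne: "S \<noteq> {}"
    using S unfolding FLc_def by blast
  have "act \<phi> ` S \<subseteq> bracket m (image \<phi> ` \<alpha>)"
  proof
    fix G assume "G \<in> act \<phi> ` S"
    then obtain F where F: "F \<in> S" "G = act \<phi> F" by blast
    then obtain Ls where Ls: "distinct Ls" "set Ls = \<alpha>" "F = flag_of m Ls"
      using Sb unfolding bracket_def by blast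
    have len: "length Ls = m" by (rule SPL_len[OF a Ls(1,2)])
    have "G = flag_of m (map (image \<phi>) Ls)" using F(2) Ls(3) flag_img[OF len] by simp
    moreover have "distinct (map (image \<phi>) Ls)" using Ls(1) inj_on_img by (simp add: distinct_map)
    moreover have "set (map (image \<phi>) Ls) = image \<phi> ` \<alpha>" using Ls(2) by simp
    ultimately show "G \<in> bracket m (image \<phi> ` \<alpha>)" unfolding bracket_def by blast
  qed
  then show ?thesis unfolding FLc_def using SPL_img[OF a] ne by blast
qed

end

lemma autom_elem: "i < m \<Longrightarrow> j < m \<Longrightarrow> i \<noteq> j \<Longrightarrow> autom m (elem i j a) (elem i j (-a))"
  unfolding autom_def using lin_elem elem_inv elem_inv2 elem_An by metis

lemma elem_An_eq: "i < m \<Longrightarrow> j < m \<Longrightarrow> i \<noteq> j \<Longrightarrow> elem i j a ` An m = An m"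
  using autom.phiA_eq[OF autom_elem] by blast

lemma FLc_elem: "i < m \<Longrightarrow> j < m \<Longrightarrow> i \<noteq> j \<Longrightarrow> S \<in> FLc m \<Longrightarrow> act (elem i j a) ` S \<in> FLc m"
  using autom.FLc_img[OF autom_elem] by blast

lemma act_comp: "act (f \<circ> g) = act f \<circ> act g"
  by (simp add: act_def fun_eq_iff image_comp)

lemma act_id: "act id = id"
  by (simp add: act_def fun_eq_iff)

lemma cycle_fin: "cycle K q z \<Longrightarrow> finite (supp z)"
  by (simp add: cycle_def chain_def)

lemma cycle_vertex: "cycle K q z \<Longrightarrow> s \<in> supp z \<Longrightarrow> set s \<in> K"
  by (simp add: cycle_def chain_def osimplex_def)

definition goodE :: "nat \<Rightarrow> ('a::ring_1 vec \<Rightarrow> 'a vec) \<Rightarrow> bool" where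
  "goodE n e \<longleftrightarrow> (\<forall>\<sigma>\<in>FLc (Suc n). act e ` \<sigma> \<in> FLc (Suc n)) \<and>
     (\<forall>q z. cycle (FLc n) q z \<longrightarrow> homologous (FLc (Suc n)) q (push (act e \<circ> incl n) z) (push (incl n) z))"

lemma goodE_id: "goodE n id"
  unfolding goodE_def act_id by (simp add: homologous_refl)

lemma goodE_comp: fixes e1 e2 :: "'a::ring_1 vec \<Rightarrow> 'a vec" assumes g1: "goodE n e1" and g2: "goodE n e2" shows "goodE n (e1 \<circ> e2)"
  unfolding goodE_def
proof (intro conjI allI impI ballI)
  fix \<sigma> :: "'a flag set"
  assume s: "\<sigma> \<in> FLc (Suc n)"
  have "act e2 ` \<sigma> \<in> FLc (Suc n)" using g2 s unfolding goodE_def by blast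
  then have "act e1 ` (act e2 ` \<sigma>) \<in> FLc (Suc n)" using g1 unfolding goodE_def by blast
  then show "act (e1 \<circ> e2) ` \<sigma> \<in> FLc (Suc n)" by (simp add: act_comp image_comp)
next
  fix q and z :: "'a flag list \<Rightarrow> int" assume z: "cycle (FLc n) q z"
  have fz: "finite (supp z)" by (rule cycle_fin[OF z])
  have H2: "homologous (FLc (Suc n)) q (push (act e2 \<circ> incl n) z) (push (incl n) z)"
    using g2 z unfolding goodE_def by blast
  have H1: "homologous (FLc (Suc n)) q (push (act e1 \<circ> incl n) z) (push (incl n) z)"
    using g1 z unfolding goodE_def by blast
  have K: "\<forall>\<sigma>\<in>FLc (Suc n). act e1 ` \<sigma> \<in> FLc (Suc n)" using g1 unfolding goodE_def by blast
  have "homologous (FLc (Suc n)) q (push (act e1) (push (act e2 \<circ> incl n) z)) (push (act e1) (push (incl n) z))"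
    by (rule homologous_push[OF H2 finite_supp_push'[OF fz] finite_supp_push'[OF fz] K])
  then have "homologous (FLc (Suc n)) q (push (act (e1 \<circ> e2) \<circ> incl n) z) (push (act e1 \<circ> incl n) z)"
    unfolding push_comp[OF fz] act_comp by (simp add: comp_assoc)
  then show "homologous (FLc (Suc n)) q (push (act (e1 \<circ> e2) \<circ> incl n) z) (push (incl n) z)"
    using H1 by (rule homologous_trans)
qed

lemma vertexD: assumes "\<sigma> \<in> FLc n" "F \<in> \<sigma>"
  obtains \<alpha> Ls where "\<alpha> \<in> SPL n" "distinct Ls" "set Ls = \<alpha>" "F = flag_of n Ls" "length Ls = n"
  using FLc_vertex[OF assms] SPL_len by metis

lemma goodE_fix: fixes e :: "'a::ring_1 vec \<Rightarrow> 'a vec" assumes a: "\<forall>\<sigma>\<in>FLc (Suc n). act e ` \<sigma> \<in> FLc (Suc n)"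
  and fx: "\<And>\<sigma> F. \<sigma> \<in> FLc n \<Longrightarrow> F \<in> \<sigma> \<Longrightarrow> act e (incl n F) = incl n F"
  shows "goodE n e"
  unfolding goodE_def
proof (intro conjI allI impI)
  show "\<forall>\<sigma>\<in>FLc (Suc n). act e ` \<sigma> \<in> FLc (Suc n)" by (rule a)
  fix q and z :: "'a flag list \<Rightarrow> int" assume z: "cycle (FLc n) q z"
  have "push (act e \<circ> incl n) z = push (incl n) z"
  proof (rule push_cong)
    fix s assume s: "s \<in> supp z"
    have "set s \<in> FLc n" by (rule cycle_vertex[OF z s])
    then show "map (act e \<circ> incl n) s = map (incl n) s"
      using fx by (intro map_cong) auto
  qed
  then show "homologous (FLc (Suc n)) q (push (act e \<circ> incl n) z) (push (incl n) z)"
    by (simp add: homologous_refl)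
qed

lemma goodE_j: fixes e :: "'a::ring_1 vec \<Rightarrow> 'a vec" assumes a: "\<forall>\<sigma>\<in>FLc (Suc n). act e ` \<sigma> \<in> FLc (Suc n)"
  and fx: "\<And>\<sigma> F. \<sigma> \<in> FLc n \<Longrightarrow> F \<in> \<sigma> \<Longrightarrow> act e (jmap n F) = jmap n F"
  shows "goodE n e"
  unfolding goodE_def
proof (intro conjI allI impI)
  show "\<forall>\<sigma>\<in>FLc (Suc n). act e ` \<sigma> \<in> FLc (Suc n)" by (rule a)
  fix q and z :: "'a flag list \<Rightarrow> int" assume z: "cycle (FLc n) q z"
  have down: "\<forall>\<sigma>\<in>FLc (Suc n). \<forall>\<tau>. \<tau> \<noteq> {} \<and> \<tau> \<subseteq> \<sigma> \<longrightarrow> \<tau> \<in> FLc (Suc n)"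
    using FLc_down by blast
  have C1: "homologous (FLc (Suc n)) q (push (jmap n) z) (push (incl n) z)"
    by (rule contig[OF z down]) (use contig_incl_jmap in blast)
  have C2: "homologous (FLc (Suc n)) q (push (act e \<circ> jmap n) z) (push (act e \<circ> incl n) z)"
  proof (rule contig[OF z down], intro ballI)
    fix \<sigma> :: "'a flag set" assume "\<sigma> \<in> FLc n"
    then have "act e ` (incl n ` \<sigma> \<union> jmap n ` \<sigma>) \<in> FLc (Suc n)"
      using a contig_incl_jmap by blast
    then show "(act e \<circ> incl n) ` \<sigma> \<union> (act e \<circ> jmap n) ` \<sigma> \<in> FLc (Suc n)"
      by (simp add: image_comp image_Un)
  qed
  have "push (act e \<circ> jmap n) z = push (jmap n) z"
  proof (rule push_cong)
    fix s assume s: "s \<in> supp z"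
    have "set s \<in> FLc n" by (rule cycle_vertex[OF z s])
    then show "map (act e \<circ> jmap n) s = map (jmap n) s"
      using fx by (intro map_cong) auto
  qed
  then have "homologous (FLc (Suc n)) q (push (act e \<circ> incl n) z) (push (jmap n) z)"
    using homologous_sym[OF C2] by simp
  then show "homologous (FLc (Suc n)) q (push (act e \<circ> incl n) z) (push (incl n) z)"
    using C1 by (rule homologous_trans)
qed

lemma elem_fix_An: "v \<in> An n \<Longrightarrow> elem n j a v = v"
  by (simp add: elem_def An_def)

lemma flag_sub_An: assumes "\<sigma> \<in> FLc n" "F \<in> \<sigma>" shows "F k \<subseteq> An n"
proof -
  obtain \<alpha> Ls where L: "\<alpha> \<in> SPL n" "distinct Ls" "set Ls = \<alpha>" "F = flag_of n Ls" "length Ls = n"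
    using assms by (rule vertexD)
  show ?thesis
  proof (cases "k < n")
    case True
    have "psum Ls k \<subseteq> An n"
    proof (rule psum_sub)
      fix j assume "j < k"
      then have "Ls ! j \<in> \<alpha>" using True L by auto
      then show "Ls ! j \<subseteq> An n" using SPL_D(3)[OF L(1)] by blast
    qed
    then show ?thesis using True L(4) by (simp add: flag_of_def)
  next
    case False then show ?thesis using L(4) by (simp add: flag_of_def)
  qed
qed

lemma goodE_row: assumes j: "j < n" shows "goodE n (elem n j a :: 'a::ring_1 vec \<Rightarrow> 'a vec)"
proof (rule goodE_fix)
  show "\<forall>\<sigma>\<in>FLc (Suc n). act (elem n j a) ` \<sigma> \<in> FLc (Suc n)"
  proof
    fix \<sigma> :: "'a flag set" assume "\<sigma> \<in> FLc (Suc n)"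
    then show "act (elem n j a) ` \<sigma> \<in> FLc (Suc n)" by (rule FLc_elem[rotated 3]) (use j in auto)
  qed
  fix \<sigma> :: "'a flag set" and F assume s: "\<sigma> \<in> FLc n" "F \<in> \<sigma>"
  show "act (elem n j a) (incl n F) = incl n F"
  proof
    fix k
    show "act (elem n j a) (incl n F) k = incl n F k"
    proof (cases "k \<le> n")
      case True
      have "F k \<subseteq> An n" by (rule flag_sub_An[OF s])
      then have "elem n j a ` F k = F k"
        by (auto simp: elem_fix_An subset_iff image_iff)
      then show ?thesis using True by (simp add: act_def incl_def)
    next
      case False
      then show ?thesis using elem_An_eq[of n "Suc n" j a] j by (simp add: act_def incl_def)
    qed
  qed
qed

lemma lsum_closed: assumes "i \<noteq> n" "u \<in> lsum (Ln n) X" shows "elem i n b u \<in> lsum (Ln n) X"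
proof -
  obtain l x where lx: "u = vadd l x" "l \<in> Ln n" "x \<in> X" using assms(2) unfolding lsum_def by blast
  obtain c where c: "l = smult c (en n)" using lx(2) unfolding Ln_def by blast
  have "elem i n b u = vadd (smult (c + x i * b) (en n)) x"
    using assms(1) unfolding lx(1) c by (auto simp: elem_def vadd_def smult_def en_def fun_eq_iff algebra_simps)
  moreover have "smult (c + x i * b) (en n) \<in> Ln n" unfolding Ln_def by blast
  ultimately show ?thesis using lx(3) unfolding lsum_def by blast
qed

lemma lsum_fix: assumes "i \<noteq> n" shows "elem i n a ` lsum (Ln n) X = lsum (Ln n) X"
proof
  show "elem i n a ` lsum (Ln n) X \<subseteq> lsum (Ln n) X" using lsum_closed[OF assms] by blast
  show "lsum (Ln n) X \<subseteq> elem i n a ` lsum (Ln n) X"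
  proof
    fix u assume u: "u \<in> lsum (Ln n) X"
    have "elem i n (-a) u \<in> lsum (Ln n) X" by (rule lsum_closed[OF assms u])
    moreover have "u = elem i n a (elem i n (-a) u)" by (rule elem_inv2[OF assms, symmetric])
    ultimately show "u \<in> elem i n a ` lsum (Ln n) X" by blast
  qed
qed

lemma goodE_col: assumes i: "i < n" shows "goodE n (elem i n a :: 'a::ring_1 vec \<Rightarrow> 'a vec)"
proof (rule goodE_j)
  show "\<forall>\<sigma>\<in>FLc (Suc n). act (elem i n a) ` \<sigma> \<in> FLc (Suc n)"
  proof
    fix \<sigma> :: "'a flag set" assume "\<sigma> \<in> FLc (Suc n)"
    then show "act (elem i n a) ` \<sigma> \<in> FLc (Suc n)" by (rule FLc_elem[rotated 3]) (use i in auto)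
  qed
  fix \<sigma> :: "'a flag set" and F assume s: "\<sigma> \<in> FLc n" "F \<in> \<sigma>"
  show "act (elem i n a) (jmap n F) = jmap n F"
  proof
    fix k
    have z: "elem i n a vzero = (vzero :: 'a vec)" using lin_zero[OF lin_elem] by blast
    show "act (elem i n a) (jmap n F) k = jmap n F k"
      using i lsum_fix[of i n a] elem_An_eq[of i "Suc n" n a] z
      by (auto simp: act_def jmap_def)
  qed
qed

lemma elem_comm: assumes "i < n" "j < n" "i \<noteq> j"
  shows "(elem i j a :: 'a::ring_1 vec \<Rightarrow> 'a vec) = elem n j (-1) \<circ> elem i n (-a) \<circ> elem n j 1 \<circ> elem i n a"
  using assms by (auto simp: elem_def fun_eq_iff algebra_simps)

lemma goodE_elem: assumes "i < Suc n" "j < Suc n" "i \<noteq> j"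
  shows "goodE n (elem i j a :: 'a::ring_1 vec \<Rightarrow> 'a vec)"
proof (cases "i = n")
  case True
  have "j < n" using assms True by auto
  then show ?thesis unfolding True by (rule goodE_row)
next
  case False
  show ?thesis
  proof (cases "j = n")
    case True
    have "i < n" using assms False by auto
    then show ?thesis unfolding True by (rule goodE_col)
  next
    case False2: False
    have i: "i < n" "j < n" using assms False False2 by auto
    show ?thesis unfolding elem_comm[OF i assms(3)]
      by (intro goodE_comp goodE_row goodE_col i)
  qed
qed

lemma goodE_En: "g \<in> En (Suc n) \<Longrightarrow> goodE n g"
proof (induction rule: En.induct)
  case En_id then show ?case by (rule goodE_id)
next
  case (En_step g i j a) then show ?case by (intro goodE_comp goodE_elem)
qed

lemma part1: assumes g: "g \<in> En (Suc n)" and z: "cycle (FLc n) q z"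
  shows "homologous (FLc (Suc n)) q (push (act g) (push (incl n) z)) (push (incl n) z)"
proof -
  have "homologous (FLc (Suc n)) q (push (act g \<circ> incl n) z) (push (incl n) z)"
    using goodE_En[OF g] z unfolding goodE_def by blast
  then show ?thesis by (simp add: push_comp[OF cycle_fin[OF z]])
qed

definition rN :: "nat \<Rightarrow> 'a::ring_1 flag \<Rightarrow> 'a flag" where
  "rN N F = (\<lambda>k. if k \<le> N then F k else An N)"

lemma rN_base: assumes "\<sigma> \<in> FLc n" "F \<in> \<sigma>" shows "rN n (ext_inf n F) = F"
proof -
  obtain \<alpha> Ls where L: "\<alpha> \<in> SPL n" "distinct Ls" "set Ls = \<alpha>" "F = flag_of n Ls" "length Ls = n"
    using assms by (rule vertexD)
  show ?thesis
  proof
    fix k show "rN n (ext_inf n F) k = F k"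
      using L(4) by (cases "k \<le> n") (auto simp: rN_def ext_inf_def flag_of_def)
  qed
qed

lemma rN_step: "n \<le> N \<Longrightarrow> rN (Suc N) (ext_inf n F) = incl N (rN N (ext_inf n F))"
  by (auto simp: rN_def ext_inf_def incl_def fun_eq_iff le_Suc_eq)

lemma rN_FLc: assumes S: "S \<in> FLc n" and nN: "n \<le> N" shows "(rN N \<circ> ext_inf n) ` S \<in> FLc N"
  using nN
proof (induction N rule: dec_induct)
  case base
  have "\<forall>F\<in>S. (rN n \<circ> ext_inf n) F = F" using rN_base[OF S] by simp
  then have "(rN n \<circ> ext_inf n) ` S = S" by (simp add: image_iff set_eq_iff)
  then show ?case using S by simp
next
  case (step N)
  have "(rN (Suc N) \<circ> ext_inf n) ` S = incl N ` ((rN N \<circ> ext_inf n) ` S)"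
    using step(1) by (simp add: image_comp rN_step comp_def)
  then show ?case using incl_FLc[OF step(3)] by simp
qed

lemma ext_r: "n \<le> N \<Longrightarrow> ext_inf N (rN N (ext_inf n F)) = ext_inf n F"
  by (auto simp: rN_def ext_inf_def fun_eq_iff)

lemma ext_incl: "ext_inf (Suc N) (incl N F) = ext_inf N F"
  by (auto simp: incl_def ext_inf_def fun_eq_iff le_Suc_eq)

lemma En_An: "g \<in> En m \<Longrightarrow> m \<le> k \<Longrightarrow> g ` An k = An k"
proof (induction rule: En.induct)
  case En_id then show ?case by simp
next
  case (En_step g i j a)
  then have "elem i j a ` An k = An k" by (intro elem_An_eq) auto
  have "(elem i j a \<circ> g) ` An k = elem i j a ` (g ` An k)" by (rule image_comp[symmetric])
  then show ?case using En_step \<open>elem i j a ` An k = An k\<close> by simp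
qed

lemma En_mono: "g \<in> En m \<Longrightarrow> m \<le> m' \<Longrightarrow> g \<in> En m'"
proof (induction rule: En.induct)
  case En_id show ?case by (rule En.En_id)
next
  case (En_step g i j a) then show ?case by (intro En.En_step) auto
qed

lemma ext_act: assumes g: "g \<in> En (Suc N)"
  shows "ext_inf (Suc N) (act g (incl N F)) = act g (ext_inf N F)"
proof
  fix k show "ext_inf (Suc N) (act g (incl N F)) k = act g (ext_inf N F) k"
  proof (cases "k \<le> Suc N")
    case True then show ?thesis by (cases "k \<le> N") (auto simp: ext_inf_def act_def incl_def le_Suc_eq)
  next
    case False
    then have "g ` An k = An k" using En_An[OF g] by simp
    then show ?thesis using False by (simp add: ext_inf_def act_def incl_def)
  qed
qed

lemma push_zero: "push f (\<lambda>_. 0) = (\<lambda>_. 0)"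
  by (simp add: push_def supp_def)

lemma part2: fixes g :: "'a::ring_1 vec \<Rightarrow> 'a vec" and z :: "'a flag list \<Rightarrow> int"
  assumes gE: "g \<in> E_all" and z: "cycle FLinf q z"
  shows "homologous FLinf q (push (act g) z) z"
proof -
  obtain m where g: "g \<in> En m" using gE unfolding E_all_def by blast
  have fz: "finite (supp z)" by (rule cycle_fin[OF z])
  have h: "\<forall>s\<in>supp z. \<exists>p. snd p \<in> FLc (fst p) \<and> set s = ext_inf (fst p) ` snd p"
  proof
    fix s assume "s \<in> supp z"
    then have "set s \<in> FLinf" by (rule cycle_vertex[OF z])
    then obtain n S where "S \<in> FLc n" "set s = ext_inf n ` S" unfolding FLinf_def by blast
    then show "\<exists>p. snd p \<in> FLc (fst p) \<and> set s = ext_inf (fst p) ` snd p"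
      by (intro exI[of _ "(n, S)"]) simp
  qed
  obtain p where p: "\<forall>s\<in>supp z. snd (p s) \<in> FLc (fst (p s)) \<and> set s = ext_inf (fst (p s)) ` snd (p s)"
    using bchoice[OF h] by blast
  define N where "N = Max (insert m ((\<lambda>s. fst (p s)) ` supp z))"
  have fin: "finite (insert m ((\<lambda>s. fst (p s)) ` supp z))" using fz by simp
  have mN: "m \<le> N" unfolding N_def by (rule Max_ge[OF fin]) simp
  have nN: "\<And>s. s \<in> supp z \<Longrightarrow> fst (p s) \<le> N" unfolding N_def by (rule Max_ge[OF fin]) simp
  have gN: "g \<in> En (Suc N)" using En_mono[OF g] mN by simp
  define z' where "z' = push (rN N) z"
  have fz': "finite (supp z')" unfolding z'_def by (rule finite_supp_push'[OF fz])
  let ?K0 = "set ` supp z"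
  have c0: "chain ?K0 q z"
    using z unfolding cycle_def chain_def osimplex_def by auto
  have K0: "\<forall>\<sigma>\<in>?K0. rN N ` \<sigma> \<in> FLc N"
  proof
    fix \<sigma> assume "\<sigma> \<in> ?K0"
    then obtain s where s: "s \<in> supp z" "\<sigma> = set s" by blast
    then have "rN N ` \<sigma> = (rN N \<circ> ext_inf (fst (p s))) ` snd (p s)" using p by (simp add: image_comp)
    moreover have "snd (p s) \<in> FLc (fst (p s))" using p s by blast
    then have "(rN N \<circ> ext_inf (fst (p s))) ` snd (p s) \<in> FLc N" by (rule rN_FLc[OF _ nN[OF s(1)]])
    ultimately show "rN N ` \<sigma> \<in> FLc N" by simp
  qed
  have cz': "chain (FLc N) q z'" unfolding z'_def by (rule chain_push[OF c0 K0])
  have bz: "q = 0 \<or> (\<forall>t. bd z t = 0)" using z by (simp add: cycle_def)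
  have cyc': "cycle (FLc N) q z'"
  proof -
    have "q = 0 \<or> (\<forall>t. bd z' t = 0)"
    proof (cases "q = 0")
      case False
      then have "bd z = (\<lambda>_. 0)" using bz by auto
      then have "\<forall>t. bd z' t = 0" unfolding z'_def bd_push[OF fz] by (simp add: push_zero)
      then show ?thesis by simp
    qed simp
    then show ?thesis using cz' by (simp add: cycle_def)
  qed
  have H: "homologous (FLc (Suc N)) q (push (act g) (push (incl N) z')) (push (incl N) z')"
    by (rule part1[OF gN cyc'])
  have Kinf: "\<forall>\<sigma>\<in>FLc (Suc N). ext_inf (Suc N) ` \<sigma> \<in> FLinf"
    unfolding FLinf_def by blast
  have fi: "finite (supp (push (incl N) z'))" by (rule finite_supp_push'[OF fz'])
  have fa: "finite (supp (push (act g) (push (incl N) z')))" by (rule finite_supp_push'[OF fi])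
  have H2: "homologous FLinf q (push (ext_inf (Suc N)) (push (act g) (push (incl N) z')))
                              (push (ext_inf (Suc N)) (push (incl N) z'))"
    by (rule homologous_push[OF H fa fi Kinf])
  have vert: "\<And>s F. s \<in> supp z \<Longrightarrow> F \<in> set s \<Longrightarrow> ext_inf N (rN N F) = F"
  proof -
    fix s F assume s: "s \<in> supp z" and F: "F \<in> set s"
    then obtain F0 where "F = ext_inf (fst (p s)) F0" using p by blast
    then show "ext_inf N (rN N F) = F" using ext_r[OF nN[OF s]] by simp
  qed
  have E1: "push (ext_inf (Suc N)) (push (incl N) z') = z"
  proof -
    have "push (ext_inf (Suc N)) (push (incl N) z') = push (ext_inf (Suc N) \<circ> (incl N \<circ> rN N)) z"
      unfolding z'_def by (simp add: push_comp fz)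
    also have "\<dots> = push (\<lambda>x. x) z"
    proof (rule push_cong)
      fix s assume s: "s \<in> supp z"
      show "map (ext_inf (Suc N) \<circ> (incl N \<circ> rN N)) s = map (\<lambda>x. x) s"
        by (rule map_cong[OF refl]) (simp add: ext_incl vert[OF s])
    qed
    also have "\<dots> = z" by (rule push_id[OF fz])
    finally show ?thesis .
  qed
  have E2: "push (ext_inf (Suc N)) (push (act g) (push (incl N) z')) = push (act g) z"
  proof -
    have "push (ext_inf (Suc N)) (push (act g) (push (incl N) z')) =
          push (ext_inf (Suc N) \<circ> (act g \<circ> (incl N \<circ> rN N))) z"
      unfolding z'_def by (simp add: push_comp fz finite_supp_push')
    also have "\<dots> = push (act g) z"
    proof (rule push_cong)
      fix s assume s: "s \<in> supp z"
      show "map (ext_inf (Suc N) \<circ> (act g \<circ> (incl N \<circ> rN N))) s = map (act g) s"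
        by (rule map_cong[OF refl]) (simp add: ext_act[OF gN] vert[OF s])
    qed
    finally show ?thesis .
  qed
  show ?thesis using H2 unfolding E1 E2 .
qed

theorem corollary9:
  fixes n :: nat
  assumes "IBN TYPE('a::ring_1)"
  shows "(\<forall>(g :: 'a vec \<Rightarrow> 'a vec) q z. g \<in> En (Suc n) \<and> cycle (FLc n) q z \<longrightarrow>
            homologous (FLc (Suc n)) q (push (act g) (push (incl n) z)) (push (incl n) z))
       \<and> (\<forall>(g :: 'a vec \<Rightarrow> 'a vec) q z. g \<in> E_all \<and> cycle FLinf q z \<longrightarrow>
            homologous FLinf q (push (act g) z) z)"
  using part1 part2 by blast

end
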